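(* In the setting of the context, for each $t\in\{0,1,\dots,T-1\}$, \[ \mathbb{E}\{P^\ast_{t+1}(Z)\mid A_t,H_t\} = m_t(A_t,H_t). \] Moreover, given fixed nuisance estimates $\{\widehat m_s^\ast,\widehat Q_s\}_{s=t+1}^T$ (with corresponding $\widehat r_s,\widehat\phi_s$) used to construct $\widehat P^\ast_{t+1}(Z)$, \begin{align*} \mathbb{E}\{\widehat P^\ast_{t+1}(Z) - m_t(A_t,H_t)\mid A_t,H_t\} &= \sum_{s=t+1}^T \mathbb{E}\Big[\Big\{\prod_{k=t+1}^{s-1}\widehat r_k(A_k\mid H_k)\Big\}\{m_s(A_s,H_s) - \widehat m_s^\ast(A_s,H_s)\}\{\widehat r_s(A_s\mid H_s) - r_s(A_s\mid H_s)\}\,\Big|\,A_t,H_t\Big]\\ &\quad + \sum_{s=t+1}^T \mathbb{E}\Big[\Big\{\prod_{k=t+1}^{s-1}\widehat r_k(A_k\mid H_k)\Big\}\sum_{b_s}\widehat m_s^\ast(b_s,H_s)\{\widehat Q_s(b_s\mid H_s) + \widehat\phi_s(b_s;A_s,H_s) - Q_s(b_s\mid H_s)\}\,\Big|\,A_t,H_t\Big]. \end{align*}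
   Context: Observed data $Z=(X_1,A_1,\dots,X_T,A_T,Y)\sim\mathbb{P}$, $A_t\in\{0,1\}$, $H_t=(X_1,A_1,\dots,A_{t-1},X_t)$. Fix $\overline a_T\in\{0,1\}^T$ and twice differentiable $s_t:[0,1]\to[0,1]$ with non-zero bounded derivatives $s_t'$; assume $r_t$ is uniformly bounded. $Q_t(a_t\mid H_t)=\mathbb{P}(A_t=a_t\mid H_t)+s_t\{\mathbb{P}(A_t=a_t\mid H_t)\}\{1-\mathbb{P}(A_t=a_t\mid H_t)\}$, $Q_t(1-a_t\mid H_t)=1-Q_t(a_t\mid H_t)$, $r_t(b\mid H_t)=Q_t(b\mid H_t)/\mathbb{P}(A_t=b\mid H_t)$. $\phi_t(b;A_t,H_t)=\{2\mathbf{1}(b=a_t)-1\}\{\mathbf{1}(A_t=a_t)-\mathbb{P}(A_t=a_t\mid H_t)\}[1-s_t\{\mathbb{P}(A_t=a_t\mid H_t)\}+s_t'\{\mathbb{P}(A_t=a_t\mid H_t)\}\{1-\mathbb{P}(A_t=a_t\mid H_t)\}]$. Sequential regressions for the treatment-value parameter: $m_T(0,H_T)=0$, $m_T(1,H_T)=1$, $m_t(A_t,H_t)=\mathbb{E}\{\sum_{b}m_{t+1}(b,H_{t+1})Q_{t+1}(b\mid H_{t+1})\mid A_t,H_t\}$ for $t<T$, with $m_0=\mathbb{E}[Q_T(1\mid H_T)\prod_{t=1}^{T-1}r_t(A_t\mid H_t)]$ (for $t=0$ the conditioning is vacuous). Pseudo-outcomes: $P_T^\ast(Z)=Q_T(1\mid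 H_T)+\phi_T(1;A_T,H_T)$, and for $t=T-1,\dots,1$, $P_t^\ast(Z)=\sum_{b_t}m_t(b_t,H_t)\{Q_t(b_t\mid H_t)+\phi_t(b_t;A_t,H_t)\}+\sum_{s=t}^{T-1}\{\prod_{k=t}^s r_k(A_k\mid H_k)\}[\sum_{b_{s+1}}m_{s+1}(b_{s+1},H_{s+1})\{Q_{s+1}(b_{s+1}\mid H_{s+1})+\phi_{s+1}(b_{s+1};A_{s+1},H_{s+1})\}-m_s(A_s,H_s)]$. $\widehat P^\ast_{t+1}$ is the same expression with $m_s,Q_s,r_s,\phi_s$ ($s\ge t+1$) replaced by $\widehat m_s^\ast,\widehat Q_s,\widehat r_s,\widehat\phi_s$ (the latter three from a propensity estimate), where $\widehat m_T^\ast(b,H_T)=b$. *)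

theory Defs
  imports "HOL-Probability.Probability"
begin

text \<open>
  Paths: a (partial) observed trajectory is a function omega :: nat => 'x * bool,
  where omega k = (X_k, A_k) for time points k = 1,2,...  (A_k = True means A_k = 1).
  A prefix containing (X_1,A_1,...,X_t,A_t), i.e. the data (A_t,H_t), is an element of
  space (PiM {1..t} (%_. N (x) count_space UNIV)).
\<close>

type_synonym 'x path = "nat \<Rightarrow> 'x \<times> bool"

text \<open>H_t = (X_1,A_1,...,A_{t-1},X_t), represented as (first t-1 pairs, X_t).\<close>
definition Hist :: "nat \<Rightarrow> 'x path \<Rightarrow> 'x path \<times> 'x" where
  "Hist t \<omega> = (restrict \<omega> {1..<t}, fst (\<omega> t))"

text \<open>(A_t,H_t) = first t pairs.\<close>
definition prefix :: "nat \<Rightarrow> 'x path \<Rightarrow> 'x path" where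
  "prefix t \<omega> = restrict \<omega> {1..t}"

text \<open>Replace the treatment A_t by the value b (used to evaluate m_t(b,H_t)).\<close>
definition setA :: "nat \<Rightarrow> bool \<Rightarrow> 'x path \<Rightarrow> 'x path" where
  "setA t b \<omega> = fun_upd \<omega> t (fst (\<omega> t), b)"

text \<open>P(A_t = b | H_t), given a propensity pf t = P(A_t = 1 | H_t = .).\<close>
definition propA :: "(nat \<Rightarrow> 'x path \<times> 'x \<Rightarrow> real) \<Rightarrow> nat \<Rightarrow> bool \<Rightarrow> 'x path \<Rightarrow> real" where
  "propA pf t b \<omega> = (if b then pf t (Hist t \<omega>) else 1 - pf t (Hist t \<omega>))"

definition Qf :: "(nat \<Rightarrow> real \<Rightarrow> real) \<Rightarrow> (nat \<Rightarrow> bool) \<Rightarrow> (nat \<Rightarrow> 'x path \<times> 'x \<Rightarrow> real)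
    \<Rightarrow> nat \<Rightarrow> bool \<Rightarrow> 'x path \<Rightarrow> real" where
  "Qf sf abar pf t b \<omega> =
     (let P = propA pf t (abar t) \<omega>; q = P + sf t P * (1 - P)
      in if b = abar t then q else 1 - q)"

definition rf :: "(nat \<Rightarrow> real \<Rightarrow> real) \<Rightarrow> (nat \<Rightarrow> bool) \<Rightarrow> (nat \<Rightarrow> 'x path \<times> 'x \<Rightarrow> real)
    \<Rightarrow> nat \<Rightarrow> bool \<Rightarrow> 'x path \<Rightarrow> real" where
  "rf sf abar pf t b \<omega> = Qf sf abar pf t b \<omega> / propA pf t b \<omega>"

definition phif :: "(nat \<Rightarrow> real \<Rightarrow> real) \<Rightarrow> (nat \<Rightarrow> real \<Rightarrow> real) \<Rightarrow> (nat \<Rightarrow> bool)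
    \<Rightarrow> (nat \<Rightarrow> 'x path \<times> 'x \<Rightarrow> real) \<Rightarrow> nat \<Rightarrow> bool \<Rightarrow> 'x path \<Rightarrow> real" where
  "phif sf sf' abar pf t b \<omega> =
     (let P = propA pf t (abar t) \<omega>
      in (2 * of_bool (b = abar t) - 1) * (of_bool (snd (\<omega> t) = abar t) - P)
         * (1 - sf t P + sf' t P * (1 - P)))"

text \<open>Pseudo-outcome P_t^*(Z), built from regression functions mf and propensity pf
  (mf s applied to a prefix of s pairs gives m_s(A_s,H_s)).\<close>
definition Pstar :: "nat \<Rightarrow> (nat \<Rightarrow> real \<Rightarrow> real) \<Rightarrow> (nat \<Rightarrow> real \<Rightarrow> real) \<Rightarrow> (nat \<Rightarrow> bool)
    \<Rightarrow> (nat \<Rightarrow> 'x path \<times> 'x \<Rightarrow> real) \<Rightarrow> (nat \<Rightarrow> 'x path \<Rightarrow> real) \<Rightarrow> nat \<Rightarrow> 'x path \<Rightarrow> real" where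
  "Pstar T sf sf' abar pf mf t \<omega> =
     (if t = T then Qf sf abar pf T True \<omega> + phif sf sf' abar pf T True \<omega>
      else (\<Sum>b\<in>UNIV. mf t (prefix t (setA t b \<omega>))
                 * (Qf sf abar pf t b \<omega> + phif sf sf' abar pf t b \<omega>))
         + (\<Sum>s\<in>{t..T-1}. (\<Prod>k\<in>{t..s}. rf sf abar pf k (snd (\<omega> k)) \<omega>)
              * ((\<Sum>b\<in>UNIV. mf (Suc s) (prefix (Suc s) (setA (Suc s) b \<omega>))
                    * (Qf sf abar pf (Suc s) b \<omega> + phif sf sf' abar pf (Suc s) b \<omega>))
                 - mf s (prefix s \<omega>))))"

text \<open>Conditional expectation E{ f(Z) | A_t, H_t } evaluated at the prefix h (t pairs),
  for the law of Z given sequentially by the kernels kappa t (law of X_t given the first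
  t-1 pairs) and the propensities p t (P(A_t = 1 | H_t)).  For t = 0 it is E f(Z).\<close>
function condE :: "nat \<Rightarrow> (nat \<Rightarrow> 'x path \<Rightarrow> 'x measure) \<Rightarrow> (nat \<Rightarrow> 'x path \<times> 'x \<Rightarrow> real)
    \<Rightarrow> ('x path \<Rightarrow> real) \<Rightarrow> nat \<Rightarrow> 'x path \<Rightarrow> real" where
  "condE T \<kappa> p f t h =
     (if T \<le> t then f h
      else \<integral>x. (p (Suc t) (h, x) * condE T \<kappa> p f (Suc t) (fun_upd h (Suc t) (x, True))
               + (1 - p (Suc t) (h, x)) * condE T \<kappa> p f (Suc t) (fun_upd h (Suc t) (x, False)))
           \<partial>(\<kappa> (Suc t) h))"
  by auto
termination by (relation "Wellfounded.measure (\<lambda>(T, \<kappa>, p, f, t, h). T - t)") auto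

function mtrue :: "nat \<Rightarrow> (nat \<Rightarrow> 'x path \<Rightarrow> 'x measure) \<Rightarrow> (nat \<Rightarrow> 'x path \<times> 'x \<Rightarrow> real)
    \<Rightarrow> (nat \<Rightarrow> real \<Rightarrow> real) \<Rightarrow> (nat \<Rightarrow> bool) \<Rightarrow> nat \<Rightarrow> 'x path \<Rightarrow> real" where
  "mtrue T \<kappa> p sf abar t h =
     (if T \<le> t then of_bool (snd (h T))
      else condE T \<kappa> p
             (\<lambda>\<omega>. \<Sum>b\<in>UNIV. mtrue T \<kappa> p sf abar (Suc t) (prefix (Suc t) (setA (Suc t) b \<omega>))
                           * Qf sf abar p (Suc t) b \<omega>) t h)"
  by auto
termination by (relation "Wellfounded.measure (\<lambda>(T, \<kappa>, p, sf, abar, t, h). T - t)") auto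

end

theory Submission
  imports Defs
begin


lemma integral_measurable_subprob_algebra2':
  fixes f :: "_ \<Rightarrow> _ \<Rightarrow> real"
  assumes f[measurable]: "(\<lambda>(x, y). f x y) \<in> borel_measurable (M \<Otimes>\<^sub>M N)"
  assumes L[measurable]: "L \<in> measurable M (subprob_algebra N)"
  shows "(\<lambda>x. integral\<^sup>L (L x) (f x)) \<in> borel_measurable M"
proof -
  note integral_measurable_subprob_algebra[measurable]
  note measurable_distr2[measurable]
  have "(\<lambda>x. integral\<^sup>L (distr (L x) (M \<Otimes>\<^sub>M N) (\<lambda>y. (x, y))) (\<lambda>(x, y). f x y)) \<in> borel_measurable M"
    by measurable
  then show ?thesis
  proof (rule measurable_cong[THEN iffD1, rotated])
    fix x assume x: "x \<in> space M"
    have s: "sets (L x) = sets N" using measurable_space[OF L x] by (simp add: space_subprob_algebra)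
    have P: "(\<lambda>y. (x, y)) \<in> measurable (L x) (M \<Otimes>\<^sub>M N)"
      unfolding measurable_cong_sets[OF s refl] using x by (rule measurable_Pair1')
    show "integral\<^sup>L (distr (L x) (M \<Otimes>\<^sub>M N) (Pair x)) (\<lambda>(x, y). f x y) = integral\<^sup>L (L x) (f x)"
      using integral_distr[OF P f] by simp
  qed
qed

declare condE.simps[simp del] mtrue.simps[simp del]

lemma abs_integral_le_prob:
  fixes f :: "'a \<Rightarrow> real"
  assumes "prob_space M" "\<And>x. x \<in> space M \<Longrightarrow> \<bar>f x\<bar> \<le> B"
  shows "\<bar>integral\<^sup>L M f\<bar> \<le> B"
proof -
  interpret prob_space M by fact
  obtain x where "x \<in> space M" using not_empty by auto
  then have B0: "0 \<le> B" using assms(2) by force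
  have bnd: "\<And>x. x \<in> space M \<Longrightarrow> -B \<le> f x \<and> f x \<le> B" using assms(2) by (simp add: abs_le_iff) (smt (verit))
  show ?thesis
  proof (cases "integrable M f")
    case True
    have "integral\<^sup>L M f \<le> (\<integral>x. B \<partial>M)"
      by (rule integral_mono) (use True bnd in auto)
    moreover have "(\<integral>x. - B \<partial>M) \<le> integral\<^sup>L M f"
      by (rule integral_mono) (use True bnd in auto)
    ultimately show ?thesis by (simp add: prob_space)
  next
    case False
    then show ?thesis using B0 by (simp add: not_integrable_integral_eq)
  qed
qed

lemma telescope_gen:
  fixes Rh rr Vh m mh :: "nat \<Rightarrow> real"
  assumes "u \<le> n" "Rh u = 1" "\<And>s. u \<le> s \<Longrightarrow> Rh (Suc s) = Rh s * rr s"
  shows "Vh u + (\<Sum>s\<in>{u..<n}. Rh (Suc s) * (Vh (Suc s) - mh s)) - m (u - 1) + Rh (Suc n) * (m n - mh n)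
       = (\<Sum>s\<in>{u..n}. Rh s * ((m s - mh s) * rr s + Vh s - m (s - 1)))"
  using assms(1)
proof (induction rule: dec_induct)
  case base
  then show ?case using assms(2) assms(3)[of u] by (simp add: algebra_simps)
next
  case (step n)
  have r1: "Rh (Suc n) = Rh n * rr n" and r2: "Rh (Suc (Suc n)) = Rh (Suc n) * rr (Suc n)"
    using assms(3) step(1) by auto
  have "(\<Sum>s\<in>{u..Suc n}. Rh s * ((m s - mh s) * rr s + Vh s - m (s - 1)))
      = (\<Sum>s\<in>{u..n}. Rh s * ((m s - mh s) * rr s + Vh s - m (s - 1))) + Rh (Suc n) * ((m (Suc n) - mh (Suc n)) * rr (Suc n) + Vh (Suc n) - m n)"
    using step(1) by simp
  moreover have "(\<Sum>s\<in>{u..<Suc n}. Rh (Suc s) * (Vh (Suc s) - mh s)) = (\<Sum>s\<in>{u..<n}. Rh (Suc s) * (Vh (Suc s) - mh s)) + Rh (Suc n) * (Vh (Suc n) - mh n)"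
    using step(1) by simp
  ultimately show ?case using step(3) r2 by (simp add: algebra_simps)
qed

lemma telescope:
  fixes Rh rr Vh m mh :: "nat \<Rightarrow> real"
  assumes "u \<le> n" "Rh u = 1" "\<And>s. u \<le> s \<Longrightarrow> Rh (Suc s) = Rh s * rr s" "mh n = m n"
  shows "Vh u + (\<Sum>s\<in>{u..<n}. Rh (Suc s) * (Vh (Suc s) - mh s)) - m (u - 1)
       = (\<Sum>s\<in>{u..n}. Rh s * ((m s - mh s) * rr s + Vh s - m (s - 1)))"
  using telescope_gen[OF assms(1-3), where Vh=Vh and mh=mh and m=m] assms(4) by simp

lemma alg_onestep:
  fixes P rT rF qT qF mT mF hT hF c :: real
  assumes "P * rT = qT" "(1 - P) * rF = qF"
  shows "P * (rT * (mT - hT) + (hT * qT + hF * qF) - c) + (1 - P) * (rF * (mF - hF) + (hT * qT + hF * qF) - c)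
       = P * ((mT * qT + mF * qF) - c) + (1 - P) * ((mT * qT + mF * qF) - c)"
proof -
  have "P * (rT * (mT - hT) + (hT * qT + hF * qF) - c) + (1 - P) * (rF * (mF - hF) + (hT * qT + hF * qF) - c)
      = (P * rT) * (mT - hT) + ((1 - P) * rF) * (mF - hF) + (hT * qT + hF * qF) - c"
    by (simp add: algebra_simps)
  also have "\<dots> = qT * (mT - hT) + qF * (mF - hF) + (hT * qT + hF * qF) - c" using assms by simp
  finally show ?thesis by (simp add: algebra_simps)
qed

locale setting =
  fixes T :: nat and N :: "'x measure" and \<kappa> :: "nat \<Rightarrow> 'x path \<Rightarrow> 'x measure"
    and p :: "nat \<Rightarrow> 'x path \<times> 'x \<Rightarrow> real" and S :: "('x \<times> bool) measure"
  assumes S_def: "S = N \<Otimes>\<^sub>M count_space UNIV"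
    and kernel: "\<And>t. t \<in> {1..T} \<Longrightarrow> \<kappa> t \<in> measurable (PiM {1..<t} (\<lambda>_. S)) (prob_algebra N)"
    and p_meas: "\<And>t. t \<in> {1..T} \<Longrightarrow> p t \<in> borel_measurable (PiM {1..<t} (\<lambda>_. S) \<Otimes>\<^sub>M N)"
    and p_range: "\<And>t hx. t \<in> {1..T} \<Longrightarrow> hx \<in> space (PiM {1..<t} (\<lambda>_. S) \<Otimes>\<^sub>M N)
                    \<Longrightarrow> 0 \<le> p t hx \<and> p t hx \<le> 1"
begin

abbreviation "MM t \<equiv> PiM {1..t} (\<lambda>_::nat. S)"
abbreviation "Om t \<equiv> space (MM t)"
abbreviation "CE f t h \<equiv> condE T \<kappa> p f t h"

definition good :: "nat \<Rightarrow> ('x path \<Rightarrow> real) \<Rightarrow> bool" where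
  "good t f \<longleftrightarrow> f \<in> borel_measurable (MM t) \<and> (\<exists>B. \<forall>h\<in>Om t. \<bar>f h\<bar> \<le> B)"

lemma space_S: "space S = space N \<times> UNIV" by (simp add: S_def space_pair_measure)

lemma Om_iff: "h \<in> Om t \<longleftrightarrow> (\<forall>i\<in>{1..t}. fst (h i) \<in> space N) \<and> (\<forall>i. i \<notin> {1..t} \<longrightarrow> h i = undefined)"
  by (auto simp: space_PiM PiE_def Pi_def extensional_def space_S mem_Times_iff)

lemma upd_in: "h \<in> Om t \<Longrightarrow> x \<in> space N \<Longrightarrow> h(Suc t := (x,b)) \<in> Om (Suc t)"
  unfolding Om_iff by auto

lemma prefix_id: "h \<in> Om t \<Longrightarrow> prefix t h = h"
  unfolding Om_iff by (auto simp: prefix_def restrict_def fun_eq_iff)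

lemma prefix_in: "\<omega> \<in> Om T \<Longrightarrow> s \<le> T \<Longrightarrow> prefix s \<omega> \<in> Om s"
  unfolding Om_iff by (auto simp: prefix_def)

lemma prefix_prefix: "k \<le> s \<Longrightarrow> prefix k (prefix s \<omega>) = prefix k \<omega>"
  by (auto simp: prefix_def restrict_def fun_eq_iff)

lemma prefix_upd: "s \<le> t \<Longrightarrow> prefix s (h(Suc t := v)) = prefix s h"
  by (auto simp: prefix_def restrict_def fun_eq_iff)

lemma upd_IH: "\<forall>h'\<in>Om (Suc n). A h' = B h' \<Longrightarrow> h \<in> Om n \<Longrightarrow> x \<in> space N \<Longrightarrow> A (h(Suc n := (x,b))) = B (h(Suc n := (x,b)))"
  using upd_in by blast

lemma kprob:
  assumes "t < T" "h \<in> Om t"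
  shows "prob_space (\<kappa> (Suc t) h)" "sets (\<kappa> (Suc t) h) = sets N" "space (\<kappa> (Suc t) h) = space N"
proof -
  have "\<kappa> (Suc t) \<in> measurable (MM t) (prob_algebra N)"
    using kernel[of "Suc t"] assms by (simp add: atLeastLessThanSuc_atLeastAtMost)
  then have "\<kappa> (Suc t) h \<in> space (prob_algebra N)" using assms(2) by (rule measurable_space)
  then have *: "prob_space (\<kappa> (Suc t) h)" "sets (\<kappa> (Suc t) h) = sets N"
    by (auto simp: space_prob_algebra)
  then show "prob_space (\<kappa> (Suc t) h)" "sets (\<kappa> (Suc t) h) = sets N" "space (\<kappa> (Suc t) h) = space N"
    using sets_eq_imp_space_eq[OF *(2)] by auto
qed

lemma kmeas: "t < T \<Longrightarrow> \<kappa> (Suc t) \<in> measurable (MM t) (subprob_algebra N)"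
  using kernel[of "Suc t"] by (simp add: atLeastLessThanSuc_atLeastAtMost measurable_prob_algebraD)

lemma pmeas: "t < T \<Longrightarrow> p (Suc t) \<in> borel_measurable (MM t \<Otimes>\<^sub>M N)"
  using p_meas[of "Suc t"] by (simp add: atLeastLessThanSuc_atLeastAtMost)

lemma p_rng: "t < T \<Longrightarrow> h \<in> Om t \<Longrightarrow> x \<in> space N \<Longrightarrow> 0 \<le> p (Suc t) (h,x) \<and> p (Suc t) (h,x) \<le> 1"
  using p_range[of "Suc t" "(h,x)"] by (simp add: atLeastLessThanSuc_atLeastAtMost space_pair_measure)

lemma condE_ge: "T \<le> t \<Longrightarrow> CE f t h = f h"
  by (subst condE.simps) simp

lemma condE_less: "t < T \<Longrightarrow> CE f t h = (\<integral>x. (p (Suc t) (h, x) * CE f (Suc t) (h(Suc t := (x, True)))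
               + (1 - p (Suc t) (h, x)) * CE f (Suc t) (h(Suc t := (x, False)))) \<partial>(\<kappa> (Suc t) h))"
  by (subst condE.simps) simp

lemma condE_cong:
  assumes "\<forall>\<omega>\<in>Om T. f \<omega> = g \<omega>" "t \<le> T"
  shows "\<forall>h\<in>Om t. CE f t h = CE g t h"
  using assms(2)
proof (induction rule: inc_induct)
  case base then show ?case using assms(1) by (simp add: condE_ge)
next
  case (step n)
  show ?case
  proof
    fix h assume h: "h \<in> Om n"
    have pw: "\<And>x b. x \<in> space N \<Longrightarrow> CE f (Suc n) (h(Suc n := (x,b))) = CE g (Suc n) (h(Suc n := (x,b)))"
      using step.IH upd_in[OF h] by blast
    show "CE f n h = CE g n h"
      unfolding condE_less[OF step(2)]
      by (rule Bochner_Integration.integral_cong[OF refl])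
         (simp add: kprob(3)[OF step(2) h] pw)
  qed
qed

lemma condE_dep:
  assumes F: "\<And>\<omega>. F \<omega> = F (prefix s \<omega>)" and "s \<le> t" "t \<le> T"
  shows "\<forall>h\<in>Om t. CE F t h = F h"
  using assms(3)
proof (induction rule: inc_induct)
  case base then show ?case by (simp add: condE_ge)
next
  case (step n)
  show ?case
  proof
    fix h assume h: "h \<in> Om n"
    have pw: "\<And>x b. x \<in> space N \<Longrightarrow> CE F (Suc n) (h(Suc n := (x,b))) = F (h(Suc n := (x,b)))"
      using step.IH upd_in[OF h] by blast
    have Fu: "F (h(Suc n := v)) = F h" for v
      using F[of "h(Suc n := v)"] F[of h] prefix_upd[of s n h v] step(1) assms(2) by simp
    have "CE F n h = (\<integral>x. F h \<partial>(\<kappa> (Suc n) h))"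
      unfolding condE_less[OF step(2)]
      by (rule Bochner_Integration.integral_cong[OF refl])
         (simp add: kprob(3)[OF step(2) h] pw Fu algebra_simps)
    also have "\<dots> = F h"
      using prob_space.prob_space[OF kprob(1)[OF step(2) h]] by simp
    finally show "CE F n h = F h" .
  qed
qed

lemma condE_self: "s \<le> T \<Longrightarrow> (\<And>\<omega>. F \<omega> = F (prefix s \<omega>)) \<Longrightarrow> h \<in> Om s \<Longrightarrow> CE F s h = F h"
  using condE_dep[of F s s] by blast

lemma condE_const: "t \<le> T \<Longrightarrow> h \<in> Om t \<Longrightarrow> CE (\<lambda>_. c) t h = c"
  using condE_dep[of "\<lambda>_. c" 0 t] by blast

lemma condE_pull:
  assumes G: "\<And>\<omega>. G \<omega> = G (prefix s \<omega>)" and "s \<le> t" "t \<le> T"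
  shows "\<forall>h\<in>Om t. CE (\<lambda>\<omega>. G \<omega> * f \<omega>) t h = G h * CE f t h"
  using assms(3)
proof (induction rule: inc_induct)
  case base then show ?case by (simp add: condE_ge)
next
  case (step n)
  show ?case
  proof
    fix h assume h: "h \<in> Om n"
    have pw: "\<And>x b. x \<in> space N \<Longrightarrow> CE (\<lambda>\<omega>. G \<omega> * f \<omega>) (Suc n) (h(Suc n := (x,b))) = G (h(Suc n := (x,b))) * CE f (Suc n) (h(Suc n := (x,b)))"
      using step.IH upd_in[OF h] by blast
    have Gu: "G (h(Suc n := v)) = G h" for v
      using G[of "h(Suc n := v)"] G[of h] prefix_upd[of s n h v] step(1) assms(2) by simp
    have "CE (\<lambda>\<omega>. G \<omega> * f \<omega>) n h = (\<integral>x. G h * (p (Suc n) (h, x) * CE f (Suc n) (h(Suc n := (x, True)))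
               + (1 - p (Suc n) (h, x)) * CE f (Suc n) (h(Suc n := (x, False)))) \<partial>(\<kappa> (Suc n) h))"
      unfolding condE_less[OF step(2)]
      by (rule Bochner_Integration.integral_cong[OF refl])
         (simp add: kprob(3)[OF step(2) h] pw Gu algebra_simps)
    also have "\<dots> = G h * CE f n h"
      unfolding condE_less[OF step(2)] by simp
    finally show "CE (\<lambda>\<omega>. G \<omega> * f \<omega>) n h = G h * CE f n h" .
  qed
qed

lemma condE_tower:
  assumes "t \<le> s" "s \<le> T"
  shows "\<forall>h\<in>Om t. CE f t h = CE (\<lambda>\<omega>. CE f s (prefix s \<omega>)) t h"
  using assms(1)
proof (induction rule: inc_induct)
  case base
  show ?case
  proof
    fix h assume h: "h \<in> Om s"
    have "CE (\<lambda>\<omega>. CE f s (prefix s \<omega>)) s h = CE f s (prefix s h)"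
      by (rule condE_self[OF assms(2) _ h]) (simp add: prefix_prefix)
    then show "CE f s h = CE (\<lambda>\<omega>. CE f s (prefix s \<omega>)) s h" by (simp add: prefix_id[OF h])
  qed
next
  case (step n)
  have n: "n < T" using step(2) assms(2) by simp
  show ?case
  proof
    fix h assume h: "h \<in> Om n"
    have pw: "\<And>x b. x \<in> space N \<Longrightarrow> CE f (Suc n) (h(Suc n := (x,b))) = CE (\<lambda>\<omega>. CE f s (prefix s \<omega>)) (Suc n) (h(Suc n := (x,b)))"
      using step.IH upd_in[OF h] by blast
    show "CE f n h = CE (\<lambda>\<omega>. CE f s (prefix s \<omega>)) n h"
      unfolding condE_less[OF n]
      by (rule Bochner_Integration.integral_cong[OF refl])
         (simp add: kprob(3)[OF n h] pw)
  qed
qed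

lemma condE_onestep:
  assumes "Suc t \<le> T" "\<And>\<omega>. F1 \<omega> = F1 (prefix (Suc t) \<omega>)" "\<And>\<omega>. F2 \<omega> = F2 (prefix (Suc t) \<omega>)"
    "h \<in> Om t"
    "\<And>x. x \<in> space N \<Longrightarrow> p (Suc t) (h,x) * F1 (h(Suc t := (x,True))) + (1 - p (Suc t) (h,x)) * F1 (h(Suc t := (x,False)))
        = p (Suc t) (h,x) * F2 (h(Suc t := (x,True))) + (1 - p (Suc t) (h,x)) * F2 (h(Suc t := (x,False)))"
  shows "CE F1 t h = CE F2 t h"
proof -
  have t: "t < T" using assms(1) by simp
  have e1: "\<And>h'. h' \<in> Om (Suc t) \<Longrightarrow> CE F1 (Suc t) h' = F1 h'"
    by (rule condE_self[OF assms(1)], rule assms(2), assumption)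
  have e2: "\<And>h'. h' \<in> Om (Suc t) \<Longrightarrow> CE F2 (Suc t) h' = F2 h'"
    by (rule condE_self[OF assms(1)], rule assms(3), assumption)
  show ?thesis
    unfolding condE_less[OF t]
    by (rule Bochner_Integration.integral_cong[OF refl])
       (simp add: kprob(3)[OF t assms(4)] e1[OF upd_in[OF assms(4)]] e2[OF upd_in[OF assms(4)]] assms(5))
qed

lemma condE_zero:
  assumes "t \<le> s" "s \<le> T" "\<forall>h\<in>Om s. CE f s h = 0" "h \<in> Om t"
  shows "CE f t h = 0"
proof -
  have "CE f t h = CE (\<lambda>\<omega>. CE f s (prefix s \<omega>)) t h" using condE_tower[OF assms(1,2)] assms(4) by blast
  also have "\<dots> = CE (\<lambda>_. 0) t h"
    using condE_cong[of "\<lambda>\<omega>. CE f s (prefix s \<omega>)" "\<lambda>_. 0" t] assms prefix_in by simp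
  also have "\<dots> = 0" using condE_const assms by simp
  finally show ?thesis .
qed


lemma comp_meas: "k \<in> {1..t} \<Longrightarrow> (\<lambda>\<omega>. \<omega> k) \<in> measurable (MM t) S"
  by (rule measurable_component_singleton)

lemma fst_meas: "k \<in> {1..t} \<Longrightarrow> (\<lambda>\<omega>. fst (\<omega> k)) \<in> measurable (MM t) N"
proof -
  assume k: "k \<in> {1..t}"
  have "fst \<in> measurable S N" unfolding S_def by (rule measurable_fst)
  then show ?thesis by (rule measurable_compose[OF comp_meas[OF k]])
qed

lemma snd_meas: "k \<in> {1..t} \<Longrightarrow> (\<lambda>\<omega>. snd (\<omega> k)) \<in> measurable (MM t) (count_space UNIV)"
proof -
  assume k: "k \<in> {1..t}"
  have "snd \<in> measurable S (count_space UNIV)" unfolding S_def by (rule measurable_snd)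
  then show ?thesis by (rule measurable_compose[OF comp_meas[OF k]])
qed

lemma upd_meas: "(\<lambda>(h,x). h(Suc n := (x,b))) \<in> measurable (MM n \<Otimes>\<^sub>M N) (MM (Suc n))"
proof -
  have A: "(\<lambda>\<omega> i. (\<lambda>i \<omega>. if i = Suc n then (snd \<omega>, b) else fst \<omega> i) i \<omega>) \<in> measurable (MM n \<Otimes>\<^sub>M N) (MM (Suc n))"
  proof (rule measurable_PiM_single')
    fix i :: nat assume i: "i \<in> {1..Suc n}"
    show "(\<lambda>\<omega>. if i = Suc n then (snd \<omega>, b) else fst \<omega> i) \<in> measurable (MM n \<Otimes>\<^sub>M N) S"
    proof (cases "i = Suc n")
      case True
      have "(\<lambda>\<omega>. (snd \<omega>, b)) \<in> measurable (MM n \<Otimes>\<^sub>M N) S"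
        unfolding S_def by (intro measurable_Pair measurable_snd measurable_const) auto
      then show ?thesis using True by simp
    next
      case False
      then have "i \<in> {1..n}" using i by auto
      then have "(\<lambda>\<omega>. fst \<omega> i) \<in> measurable (MM n \<Otimes>\<^sub>M N) S"
        by (intro measurable_comp[OF measurable_fst comp_meas, unfolded comp_def])
      then show ?thesis using False by simp
    qed
  next
    show "(\<lambda>\<omega> i. if i = Suc n then (snd \<omega>, b) else fst \<omega> i) \<in> space (MM n \<Otimes>\<^sub>M N) \<rightarrow> (\<Pi>\<^sub>E i\<in>{1..Suc n}. space S)"
    proof
      fix \<omega> assume "\<omega> \<in> space (MM n \<Otimes>\<^sub>M N)"
      then obtain h x where hx: "\<omega> = (h,x)" "h \<in> Om n" "x \<in> space N" by (auto simp: space_pair_measure)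
      have "h(Suc n := (x,b)) \<in> Om (Suc n)" by (rule upd_in[OF hx(2,3)])
      moreover have "(\<lambda>i. if i = Suc n then (snd \<omega>, b) else fst \<omega> i) = h(Suc n := (x,b))"
        using hx by (auto simp: fun_eq_iff)
      ultimately show "(\<lambda>i. if i = Suc n then (snd \<omega>, b) else fst \<omega> i) \<in> (\<Pi>\<^sub>E i\<in>{1..Suc n}. space S)"
        by (simp add: space_PiM)
    qed
  qed
  have E: "(\<lambda>\<omega> i. (\<lambda>i \<omega>. if i = Suc n then (snd \<omega>, b) else fst \<omega> i) i \<omega>) = (\<lambda>(h,x). h(Suc n := (x,b)))"
    by (auto simp: fun_eq_iff)
  show ?thesis by (metis A E)
qed

lemma goodD: "good t f \<Longrightarrow> f \<in> borel_measurable (MM t)" "good t f \<Longrightarrow> \<exists>B. \<forall>h\<in>Om t. \<bar>f h\<bar> \<le> B"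
  by (auto simp: good_def)

lemma good_bound: assumes "good t f" obtains B where "0 \<le> B" "\<And>h. h \<in> Om t \<Longrightarrow> \<bar>f h\<bar> \<le> B"
proof -
  obtain B where "\<forall>h\<in>Om t. \<bar>f h\<bar> \<le> B" using assms by (auto simp: good_def)
  then show ?thesis using that[of "max B 0"] by force
qed

lemma good_const: "good t (\<lambda>_. c)"
  unfolding good_def by auto

lemma good_add: "good t f \<Longrightarrow> good t g \<Longrightarrow> good t (\<lambda>\<omega>. f \<omega> + g \<omega>)"
proof -
  assume f: "good t f" and g: "good t g"
  obtain A where A: "\<And>h. h \<in> Om t \<Longrightarrow> \<bar>f h\<bar> \<le> A" using good_bound[OF f] by blast
  obtain B where B: "\<And>h. h \<in> Om t \<Longrightarrow> \<bar>g h\<bar> \<le> B" using good_bound[OF g] by blast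
  have "\<forall>h\<in>Om t. \<bar>f h + g h\<bar> \<le> A + B" using A B by (smt (verit))
  then show ?thesis using f g by (auto simp: good_def)
qed

lemma good_diff: "good t f \<Longrightarrow> good t g \<Longrightarrow> good t (\<lambda>\<omega>. f \<omega> - g \<omega>)"
proof -
  assume f: "good t f" and g: "good t g"
  obtain A where A: "\<And>h. h \<in> Om t \<Longrightarrow> \<bar>f h\<bar> \<le> A" using good_bound[OF f] by blast
  obtain B where B: "\<And>h. h \<in> Om t \<Longrightarrow> \<bar>g h\<bar> \<le> B" using good_bound[OF g] by blast
  have "\<forall>h\<in>Om t. \<bar>f h - g h\<bar> \<le> A + B" using A B by (smt (verit))
  then show ?thesis using f g by (auto simp: good_def)
qed

lemma good_mult: "good t f \<Longrightarrow> good t g \<Longrightarrow> good t (\<lambda>\<omega>. f \<omega> * g \<omega>)"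
proof -
  assume f: "good t f" and g: "good t g"
  obtain A where A0: "0 \<le> A" and A: "\<And>h. h \<in> Om t \<Longrightarrow> \<bar>f h\<bar> \<le> A" using good_bound[OF f] by blast
  obtain B where B0: "0 \<le> B" and B: "\<And>h. h \<in> Om t \<Longrightarrow> \<bar>g h\<bar> \<le> B" using good_bound[OF g] by blast
  have "\<forall>h\<in>Om t. \<bar>f h * g h\<bar> \<le> A * B" using A B A0 B0 by (simp add: abs_mult mult_mono)
  then show ?thesis using f g by (auto simp: good_def)
qed

lemma good_sum: "finite I \<Longrightarrow> (\<And>i. i \<in> I \<Longrightarrow> good t (F i)) \<Longrightarrow> good t (\<lambda>\<omega>. \<Sum>i\<in>I. F i \<omega>)"
  by (induction I rule: finite_induct) (auto intro: good_add good_const)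

lemma good_prod: "finite I \<Longrightarrow> (\<And>i. i \<in> I \<Longrightarrow> good t (F i)) \<Longrightarrow> good t (\<lambda>\<omega>. \<Prod>i\<in>I. F i \<omega>)"
  by (induction I rule: finite_induct) (auto intro: good_mult good_const)

lemma good_sel: "good t (F True) \<Longrightarrow> good t (F False) \<Longrightarrow> k \<in> {1..t} \<Longrightarrow> good t (\<lambda>\<omega>. F (snd (\<omega> k)) \<omega>)"
proof -
  assume a: "good t (F True)" "good t (F False)" "k \<in> {1..t}"
  have e: "(\<lambda>\<omega>. F (snd (\<omega> k)) \<omega>) = (\<lambda>\<omega>. of_bool (snd (\<omega> k)) * F True \<omega> + (1 - of_bool (snd (\<omega> k))) * F False \<omega>)"
    by (auto simp: fun_eq_iff)
  have m: "good t (\<lambda>\<omega>. of_bool (snd (\<omega> k)))"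
  proof -
    have "(\<lambda>\<omega>. of_bool (snd (\<omega> k)) :: real) \<in> borel_measurable (MM t)"
      using measurable_comp[OF snd_meas[OF a(3)], of "\<lambda>b. of_bool b" borel] by (simp add: comp_def)
    then show ?thesis unfolding good_def by (auto intro!: exI[of _ 1])
  qed
  show ?thesis unfolding e by (intro good_add good_mult good_diff good_const m a)
qed

lemma integrable_step:
  assumes g: "good (Suc n) g" and n: "n < T" and h: "h \<in> Om n"
  shows "integrable (\<kappa> (Suc n) h) (\<lambda>x. p (Suc n) (h,x) * g (h(Suc n := (x,True))) + (1 - p (Suc n) (h,x)) * g (h(Suc n := (x,False))))"
proof -
  interpret P: prob_space "\<kappa> (Suc n) h" by (rule kprob(1)[OF n h])
  obtain B where B: "\<And>h. h \<in> Om (Suc n) \<Longrightarrow> \<bar>g h\<bar> \<le> B" using good_bound[OF g] by blast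
  have jm: "(\<lambda>(h,x). p (Suc n) (h,x) * g (h(Suc n := (x,True))) + (1 - p (Suc n) (h,x)) * g (h(Suc n := (x,False))))
      \<in> borel_measurable (MM n \<Otimes>\<^sub>M N)"
  proof -
    have g1: "(\<lambda>hx. g (case hx of (h,x) \<Rightarrow> h(Suc n := (x,b)))) \<in> borel_measurable (MM n \<Otimes>\<^sub>M N)" for b
      using measurable_comp[OF upd_meas goodD(1)[OF g]] by (simp add: comp_def)
    have g2: "(\<lambda>hx. g ((fst hx)(Suc n := (snd hx,b)))) \<in> borel_measurable (MM n \<Otimes>\<^sub>M N)" for b
      using g1[of b] by (simp add: case_prod_beta)
    show ?thesis
      using pmeas[OF n] g2[of True] g2[of False] by (simp add: case_prod_beta)
  qed
  have "(\<lambda>x. p (Suc n) (h,x) * g (h(Suc n := (x,True))) + (1 - p (Suc n) (h,x)) * g (h(Suc n := (x,False)))) \<in> borel_measurable N"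
    using measurable_Pair2[OF jm h] by simp
  then have m: "(\<lambda>x. p (Suc n) (h,x) * g (h(Suc n := (x,True))) + (1 - p (Suc n) (h,x)) * g (h(Suc n := (x,False)))) \<in> borel_measurable (\<kappa> (Suc n) h)"
    unfolding measurable_cong_sets[OF kprob(2)[OF n h] refl] .
  show ?thesis
  proof (rule P.integrable_const_bound[OF _ m])
    show "AE x in \<kappa> (Suc n) h. norm (p (Suc n) (h,x) * g (h(Suc n := (x,True))) + (1 - p (Suc n) (h,x)) * g (h(Suc n := (x,False)))) \<le> B + B"
    proof (rule AE_I2)
      fix x assume "x \<in> space (\<kappa> (Suc n) h)"
      then have x: "x \<in> space N" using kprob(3)[OF n h] by simp
      have p: "0 \<le> p (Suc n) (h,x)" "p (Suc n) (h,x) \<le> 1" using p_rng[OF n h x] by auto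
      have b1: "\<bar>g (h(Suc n := (x,True)))\<bar> \<le> B" "\<bar>g (h(Suc n := (x,False)))\<bar> \<le> B"
        using B upd_in[OF h x] by auto
      have "\<bar>p (Suc n) (h,x) * g (h(Suc n := (x,True)))\<bar> \<le> 1 * B"
        unfolding abs_mult using p b1 by (intro mult_mono) auto
      moreover have "\<bar>(1 - p (Suc n) (h,x)) * g (h(Suc n := (x,False)))\<bar> \<le> 1 * B"
        unfolding abs_mult using p b1 by (intro mult_mono) auto
      ultimately show "norm (p (Suc n) (h,x) * g (h(Suc n := (x,True))) + (1 - p (Suc n) (h,x)) * g (h(Suc n := (x,False)))) \<le> B + B"
        by simp
    qed
  qed
qed

lemma good_condE:
  assumes f: "good T f" and "t \<le> T"
  shows "good t (CE f t)"
  using assms(2)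
proof (induction rule: inc_induct)
  case base
  have "CE f T = f" by (simp add: fun_eq_iff condE_ge)
  then show ?case using f by simp
next
  case (step n)
  let ?g = "CE f (Suc n)"
  let ?F = "\<lambda>h x. p (Suc n) (h,x) * ?g (h(Suc n := (x,True))) + (1 - p (Suc n) (h,x)) * ?g (h(Suc n := (x,False)))"
  have e: "CE f n = (\<lambda>h. integral\<^sup>L (\<kappa> (Suc n) h) (?F h))"
    by (simp add: fun_eq_iff condE_less[OF step(2)])
  have jm: "(\<lambda>(h,x). ?F h x) \<in> borel_measurable (MM n \<Otimes>\<^sub>M N)"
  proof -
    have g1: "(\<lambda>hx. ?g (case hx of (h,x) \<Rightarrow> h(Suc n := (x,b)))) \<in> borel_measurable (MM n \<Otimes>\<^sub>M N)" for b
      using measurable_comp[OF upd_meas goodD(1)[OF step.IH]] by (simp add: comp_def)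
    have g2: "(\<lambda>hx. ?g ((fst hx)(Suc n := (snd hx,b)))) \<in> borel_measurable (MM n \<Otimes>\<^sub>M N)" for b
      using g1[of b] by (simp add: case_prod_beta)
    show ?thesis
      using pmeas[OF step(2)] g2[of True] g2[of False] by (simp add: case_prod_beta)
  qed
  have m: "CE f n \<in> borel_measurable (MM n)"
    unfolding e by (rule integral_measurable_subprob_algebra2'[OF jm kmeas[OF step(2)]])
  obtain B where B: "\<And>h. h \<in> Om (Suc n) \<Longrightarrow> \<bar>?g h\<bar> \<le> B" using good_bound[OF step.IH] by blast
  have "\<forall>h\<in>Om n. \<bar>CE f n h\<bar> \<le> B + B"
  proof
    fix h assume h: "h \<in> Om n"
    show "\<bar>CE f n h\<bar> \<le> B + B"
      unfolding e
    proof (rule abs_integral_le_prob[OF kprob(1)[OF step(2) h]])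
      fix x assume "x \<in> space (\<kappa> (Suc n) h)"
      then have x: "x \<in> space N" using kprob(3)[OF step(2) h] by simp
      have p: "0 \<le> p (Suc n) (h,x)" "p (Suc n) (h,x) \<le> 1" using p_rng[OF step(2) h x] by auto
      have b1: "\<bar>?g (h(Suc n := (x,True)))\<bar> \<le> B" "\<bar>?g (h(Suc n := (x,False)))\<bar> \<le> B"
        using B upd_in[OF h x] by auto
      have "\<bar>p (Suc n) (h,x) * ?g (h(Suc n := (x,True)))\<bar> \<le> 1 * B"
        unfolding abs_mult using p b1 by (intro mult_mono) auto
      moreover have "\<bar>(1 - p (Suc n) (h,x)) * ?g (h(Suc n := (x,False)))\<bar> \<le> 1 * B"
        unfolding abs_mult using p b1 by (intro mult_mono) auto
      ultimately show "\<bar>?F h x\<bar> \<le> B + B" by simp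
    qed
  qed
  then show ?case using m by (auto simp: good_def)
qed

lemma condE_add:
  assumes f: "good T f" and g: "good T g" and "t \<le> T"
  shows "\<forall>h\<in>Om t. CE (\<lambda>\<omega>. f \<omega> + g \<omega>) t h = CE f t h + CE g t h"
  using assms(3)
proof (induction rule: inc_induct)
  case base then show ?case by (simp add: condE_ge)
next
  case (step n)
  show ?case
  proof
    fix h assume h: "h \<in> Om n"
    have pw: "\<And>x b. x \<in> space N \<Longrightarrow> CE (\<lambda>\<omega>. f \<omega> + g \<omega>) (Suc n) (h(Suc n := (x,b))) = CE f (Suc n) (h(Suc n := (x,b))) + CE g (Suc n) (h(Suc n := (x,b)))"
      using step.IH upd_in[OF h] by blast
    have gf: "good (Suc n) (CE f (Suc n))" "good (Suc n) (CE g (Suc n))"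
      using good_condE[OF f] good_condE[OF g] step(2) by auto
    have "CE (\<lambda>\<omega>. f \<omega> + g \<omega>) n h =
      (\<integral>x. (p (Suc n) (h, x) * CE f (Suc n) (h(Suc n := (x, True))) + (1 - p (Suc n) (h, x)) * CE f (Suc n) (h(Suc n := (x, False))))
        + (p (Suc n) (h, x) * CE g (Suc n) (h(Suc n := (x, True))) + (1 - p (Suc n) (h, x)) * CE g (Suc n) (h(Suc n := (x, False)))) \<partial>(\<kappa> (Suc n) h))"
      unfolding condE_less[OF step(2)]
      by (rule Bochner_Integration.integral_cong[OF refl]) (simp add: kprob(3)[OF step(2) h] pw algebra_simps)
    also have "\<dots> = CE f n h + CE g n h"
      unfolding condE_less[OF step(2)]
      by (rule Bochner_Integration.integral_add[OF integrable_step[OF gf(1) step(2) h] integrable_step[OF gf(2) step(2) h]])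
    finally show "CE (\<lambda>\<omega>. f \<omega> + g \<omega>) n h = CE f n h + CE g n h" .
  qed
qed

lemma condE_diff:
  assumes f: "good T f" and g: "good T g" and "t \<le> T"
  shows "\<forall>h\<in>Om t. CE (\<lambda>\<omega>. f \<omega> - g \<omega>) t h = CE f t h - CE g t h"
  using assms(3)
proof (induction rule: inc_induct)
  case base then show ?case by (simp add: condE_ge)
next
  case (step n)
  show ?case
  proof
    fix h assume h: "h \<in> Om n"
    have pw: "\<And>x b. x \<in> space N \<Longrightarrow> CE (\<lambda>\<omega>. f \<omega> - g \<omega>) (Suc n) (h(Suc n := (x,b))) = CE f (Suc n) (h(Suc n := (x,b))) - CE g (Suc n) (h(Suc n := (x,b)))"
      using step.IH upd_in[OF h] by blast
    have gf: "good (Suc n) (CE f (Suc n))" "good (Suc n) (CE g (Suc n))"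
      using good_condE[OF f] good_condE[OF g] step(2) by auto
    have "CE (\<lambda>\<omega>. f \<omega> - g \<omega>) n h =
      (\<integral>x. (p (Suc n) (h, x) * CE f (Suc n) (h(Suc n := (x, True))) + (1 - p (Suc n) (h, x)) * CE f (Suc n) (h(Suc n := (x, False))))
        - (p (Suc n) (h, x) * CE g (Suc n) (h(Suc n := (x, True))) + (1 - p (Suc n) (h, x)) * CE g (Suc n) (h(Suc n := (x, False)))) \<partial>(\<kappa> (Suc n) h))"
      unfolding condE_less[OF step(2)]
      by (rule Bochner_Integration.integral_cong[OF refl]) (simp add: kprob(3)[OF step(2) h] pw algebra_simps)
    also have "\<dots> = CE f n h - CE g n h"
      unfolding condE_less[OF step(2)]
      by (rule Bochner_Integration.integral_diff[OF integrable_step[OF gf(1) step(2) h] integrable_step[OF gf(2) step(2) h]])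
    finally show "CE (\<lambda>\<omega>. f \<omega> - g \<omega>) n h = CE f n h - CE g n h" .
  qed
qed

lemma condE_sum:
  assumes "finite I" "\<And>i. i \<in> I \<Longrightarrow> good T (F i)" "t \<le> T" "h \<in> Om t"
  shows "CE (\<lambda>\<omega>. \<Sum>i\<in>I. F i \<omega>) t h = (\<Sum>i\<in>I. CE (F i) t h)"
  using assms(1,2)
proof (induction I rule: finite_induct)
  case empty then show ?case using condE_const[OF assms(3,4)] by simp
next
  case (insert i I)
  have "CE (\<lambda>\<omega>. \<Sum>i\<in>insert i I. F i \<omega>) t h = CE (\<lambda>\<omega>. F i \<omega> + (\<Sum>i\<in>I. F i \<omega>)) t h"
    using insert(1,2) by simp
  also have "\<dots> = CE (F i) t h + CE (\<lambda>\<omega>. \<Sum>i\<in>I. F i \<omega>) t h"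
    using condE_add[OF insert(4)[of i] good_sum[OF insert(1)] assms(3)] insert(4) assms(4) by auto
  finally show ?case using insert by simp
qed

lemma PiS_iff: "h \<in> space (PiM I (\<lambda>_::nat. S)) \<longleftrightarrow> (\<forall>i\<in>I. fst (h i) \<in> space N) \<and> (\<forall>i. i \<notin> I \<longrightarrow> h i = undefined)"
  by (auto simp: space_PiM PiE_def Pi_def extensional_def space_S mem_Times_iff)

lemma Hist_meas: "k \<in> {1..T} \<Longrightarrow> Hist k \<in> measurable (MM T) (PiM {1..<k} (\<lambda>_. S) \<Otimes>\<^sub>M N)"
  unfolding Hist_def
  by (intro measurable_Pair measurable_restrict_subset fst_meas) auto

lemma Hist_in: assumes "\<omega> \<in> Om T" "k \<in> {1..T}" shows "Hist k \<omega> \<in> space (PiM {1..<k} (\<lambda>_. S) \<Otimes>\<^sub>M N)"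
proof -
  have "restrict \<omega> {1..<k} \<in> space (PiM {1..<k} (\<lambda>_. S))" unfolding PiS_iff using assms unfolding Om_iff by auto
  moreover have "fst (\<omega> k) \<in> space N" using assms unfolding Om_iff by auto
  ultimately show ?thesis by (simp add: Hist_def space_pair_measure)
qed

lemma good_prefix: "good s g \<Longrightarrow> s \<le> T \<Longrightarrow> good T (\<lambda>\<omega>. g (prefix s \<omega>))"
proof -
  assume g: "good s g" and s: "s \<le> T"
  obtain B where B: "\<And>h. h \<in> Om s \<Longrightarrow> \<bar>g h\<bar> \<le> B" using good_bound[OF g] by blast
  have "(\<lambda>\<omega>. prefix s \<omega>) \<in> measurable (MM T) (MM s)"
    unfolding prefix_def using s by (intro measurable_restrict_subset) auto
  then have "(\<lambda>\<omega>. g (prefix s \<omega>)) \<in> borel_measurable (MM T)"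
    using goodD(1)[OF g] by (rule measurable_compose)
  moreover have "\<forall>\<omega>\<in>Om T. \<bar>g (prefix s \<omega>)\<bar> \<le> B" using B prefix_in s by blast
  ultimately show ?thesis unfolding good_def by blast
qed

lemma setA_in: "\<omega> \<in> Om T \<Longrightarrow> s \<in> {1..T} \<Longrightarrow> prefix s (setA s b \<omega>) \<in> Om s"
  unfolding Om_iff by (auto simp: prefix_def setA_def)

lemma good_setA: "good s g \<Longrightarrow> s \<in> {1..T} \<Longrightarrow> good T (\<lambda>\<omega>. g (prefix s (setA s b \<omega>)))"
proof -
  assume g: "good s g" and s: "s \<in> {1..T}"
  obtain B where B: "\<And>h. h \<in> Om s \<Longrightarrow> \<bar>g h\<bar> \<le> B" using good_bound[OF g] by blast
  have e: "(\<lambda>\<omega>. prefix s (setA s b \<omega>)) = (\<lambda>\<omega>. \<lambda>i\<in>{1..s}. if i = s then (fst (\<omega> s), b) else \<omega> i)"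
    by (auto simp: fun_eq_iff prefix_def setA_def)
  have "(\<lambda>\<omega>. prefix s (setA s b \<omega>)) \<in> measurable (MM T) (MM s)"
    unfolding e
  proof (rule measurable_restrict)
    fix i assume i: "i \<in> {1..s}"
    show "(\<lambda>\<omega>. if i = s then (fst (\<omega> s), b) else \<omega> i) \<in> measurable (MM T) S"
    proof (cases "i = s")
      case True
      have "(\<lambda>\<omega>. (fst (\<omega> s), b)) \<in> measurable (MM T) S"
        unfolding S_def using s by (intro measurable_Pair fst_meas measurable_const) auto
      then show ?thesis using True by simp
    next
      case False
      have "(\<lambda>\<omega>. \<omega> i) \<in> measurable (MM T) S" using i s by (intro comp_meas) auto
      then show ?thesis using False by simp
    qed
  qed
  then have "(\<lambda>\<omega>. g (prefix s (setA s b \<omega>))) \<in> borel_measurable (MM T)"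
    using goodD(1)[OF g] by (rule measurable_compose)
  moreover have "\<forall>\<omega>\<in>Om T. \<bar>g (prefix s (setA s b \<omega>))\<bar> \<le> B" using B setA_in s by blast
  ultimately show ?thesis unfolding good_def by blast
qed

lemma meas_cont01:
  fixes f :: "'a \<Rightarrow> real"
  assumes f: "f \<in> borel_measurable M" and r: "\<And>\<omega>. \<omega> \<in> space M \<Longrightarrow> f \<omega> \<in> {0..1}" and g: "continuous_on {0..1} g"
  shows "(\<lambda>\<omega>. g (f \<omega>) :: real) \<in> borel_measurable M"
proof -
  define c where "c = (\<lambda>x::real. max 0 (min 1 x))"
  have cc: "continuous_on UNIV c" unfolding c_def by (intro continuous_intros)
  have "continuous_on (c ` UNIV) g" using g by (rule continuous_on_subset) (auto simp: c_def)
  then have "continuous_on UNIV (g \<circ> c)" using cc continuous_on_compose by blast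
  then have "(\<lambda>\<omega>. (g \<circ> c) (f \<omega>)) \<in> borel_measurable M" by (rule borel_measurable_continuous_on[OF _ f])
  moreover have "\<And>\<omega>. \<omega> \<in> space M \<Longrightarrow> (g \<circ> c) (f \<omega>) = g (f \<omega>)"
    using r by (auto simp: c_def)
  ultimately show ?thesis using measurable_cong by (smt (verit, best))
qed

definition okp :: "(nat \<Rightarrow> 'x path \<times> 'x \<Rightarrow> real) \<Rightarrow> bool" where
  "okp pf \<longleftrightarrow> (\<forall>k\<in>{1..T}. pf k \<in> borel_measurable (PiM {1..<k} (\<lambda>_. S) \<Otimes>\<^sub>M N)) \<and>
     (\<forall>k\<in>{1..T}. \<forall>hx\<in>space (PiM {1..<k} (\<lambda>_. S) \<Otimes>\<^sub>M N). 0 \<le> pf k hx \<and> pf k hx \<le> 1)"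

lemma okp_p: "okp p" using p_meas p_range by (auto simp: okp_def)

lemma propA_rng: "okp pf \<Longrightarrow> k \<in> {1..T} \<Longrightarrow> \<omega> \<in> Om T \<Longrightarrow> 0 \<le> propA pf k b \<omega> \<and> propA pf k b \<omega> \<le> 1"
  using Hist_in[of \<omega> k] unfolding okp_def propA_def by auto

lemma propA_good: "okp pf \<Longrightarrow> k \<in> {1..T} \<Longrightarrow> good T (propA pf k b)"
proof -
  assume o: "okp pf" and k: "k \<in> {1..T}"
  have m: "(\<lambda>\<omega>. pf k (Hist k \<omega>)) \<in> borel_measurable (MM T)"
    using o k unfolding okp_def by (intro measurable_compose[OF Hist_meas[OF k]]) auto
  have "propA pf k b \<in> borel_measurable (MM T)"
    unfolding propA_def[abs_def] using m by (cases b) auto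
  moreover have "\<forall>\<omega>\<in>Om T. \<bar>propA pf k b \<omega>\<bar> \<le> 1" using propA_rng[OF o k] by auto
  ultimately show ?thesis unfolding good_def by blast
qed

lemma Hist_prefix: "k \<in> {1..s} \<Longrightarrow> Hist k (prefix s \<omega>) = Hist k \<omega>"
  by (auto simp: Hist_def prefix_def restrict_def fun_eq_iff)

lemma propA_prefix: "k \<in> {1..s} \<Longrightarrow> propA pf k b (prefix s \<omega>) = propA pf k b \<omega>"
  by (simp add: propA_def Hist_prefix)

lemma snd_prefix: "k \<in> {1..s} \<Longrightarrow> prefix s \<omega> k = \<omega> k"
  by (simp add: prefix_def)

lemma prefix_setA_prefix: "k \<le> s \<Longrightarrow> prefix k (setA k b (prefix s \<omega>)) = prefix k (setA k b \<omega>)"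
  by (auto simp: prefix_def setA_def restrict_def fun_eq_iff)

lemma Hist_upd: "h \<in> Om t \<Longrightarrow> Hist (Suc t) (h(Suc t := (x,a))) = (h, x)"
  unfolding Om_iff by (auto simp: Hist_def restrict_def fun_eq_iff)

lemma propA_upd: "h \<in> Om t \<Longrightarrow> propA pf (Suc t) b (h(Suc t := (x,a))) = (if b then pf (Suc t) (h,x) else 1 - pf (Suc t) (h,x))"
  by (simp add: propA_def Hist_upd)

lemma prefix_setA_upd: "h \<in> Om t \<Longrightarrow> prefix (Suc t) (setA (Suc t) b (h(Suc t := (x,a)))) = h(Suc t := (x,b))"
  unfolding Om_iff by (auto simp: prefix_def setA_def restrict_def fun_eq_iff)

lemma prefix_upd_self: "h \<in> Om t \<Longrightarrow> prefix (Suc t) (h(Suc t := v)) = h(Suc t := v)"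
  unfolding Om_iff by (auto simp: prefix_def restrict_def fun_eq_iff)

lemma prefix_upd_t: "h \<in> Om t \<Longrightarrow> prefix t (h(Suc t := v)) = h"
  using prefix_upd[of t t h v] prefix_id[of h t] by simp

lemma extend_Om: assumes "\<omega> \<in> Om s" "s \<le> T" "x0 \<in> space N" shows "\<exists>\<omega>'\<in>Om T. prefix s \<omega>' = \<omega>"
proof -
  define \<omega>' where "\<omega>' = (\<lambda>i. if i \<in> {1..s} then \<omega> i else if i \<in> {1..T} then (x0, True) else undefined)"
  have "\<omega>' \<in> Om T" using assms unfolding Om_iff \<omega>'_def by auto
  moreover have "prefix s \<omega>' = \<omega>" using assms unfolding Om_iff \<omega>'_def by (auto simp: prefix_def fun_eq_iff)
  ultimately show ?thesis by blast
qed
end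

locale setting2 = setting T N \<kappa> p S
  for T :: nat and N :: "'x measure" and \<kappa> :: "nat \<Rightarrow> 'x path \<Rightarrow> 'x measure"
    and p :: "nat \<Rightarrow> 'x path \<times> 'x \<Rightarrow> real" and S :: "('x \<times> bool) measure" +
  fixes sf sf' :: "nat \<Rightarrow> real \<Rightarrow> real" and abar :: "nat \<Rightarrow> bool" and C Ch Bm Ds :: real
    and ph :: "nat \<Rightarrow> 'x path \<times> 'x \<Rightarrow> real" and mh :: "nat \<Rightarrow> 'x path \<Rightarrow> real"
  assumes sf_cont: "\<And>k. k \<in> {1..T} \<Longrightarrow> continuous_on {0..1} (sf k)"
    and sf'_cont: "\<And>k. k \<in> {1..T} \<Longrightarrow> continuous_on {0..1} (sf' k)"
    and s_range: "\<And>t x. t \<in> {1..T} \<Longrightarrow> x \<in> {0..1} \<Longrightarrow> 0 \<le> sf t x \<and> sf t x \<le> 1"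
    and s'_bounded: "\<And>t x. t \<in> {1..T} \<Longrightarrow> x \<in> {0..1} \<Longrightarrow> \<bar>sf' t x\<bar> \<le> Ds"
    and r_bounded: "\<And>t b \<omega>. t \<in> {1..T} \<Longrightarrow> \<omega> \<in> space (PiM {1..T} (\<lambda>_. S))
                    \<Longrightarrow> Qf sf abar p t b \<omega> \<le> C * propA p t b \<omega>"
    and ph_meas: "\<And>t. t \<in> {1..T} \<Longrightarrow> ph t \<in> borel_measurable (PiM {1..<t} (\<lambda>_. S) \<Otimes>\<^sub>M N)"
    and ph_range: "\<And>t hx. t \<in> {1..T} \<Longrightarrow> hx \<in> space (PiM {1..<t} (\<lambda>_. S) \<Otimes>\<^sub>M N)
                    \<Longrightarrow> 0 \<le> ph t hx \<and> ph t hx \<le> 1"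
    and rh_bounded: "\<And>t b \<omega>. t \<in> {1..T} \<Longrightarrow> \<omega> \<in> space (PiM {1..T} (\<lambda>_. S))
                    \<Longrightarrow> \<bar>rf sf abar ph t b \<omega>\<bar> \<le> Ch"
    and mh_meas: "\<And>t. t \<in> {1..T} \<Longrightarrow> mh t \<in> borel_measurable (PiM {1..t} (\<lambda>_. S))"
    and mh_bounded: "\<And>t h. t \<in> {1..T} \<Longrightarrow> h \<in> space (PiM {1..t} (\<lambda>_. S)) \<Longrightarrow> \<bar>mh t h\<bar> \<le> Bm"
    and mh_T: "\<And>h. h \<in> space (PiM {1..T} (\<lambda>_. S)) \<Longrightarrow> mh T h = of_bool (snd (h T))"
begin

lemma okp_ph: "okp ph" using ph_meas ph_range by (auto simp: okp_def)

lemma sP_good: "okp pf \<Longrightarrow> k \<in> {1..T} \<Longrightarrow> good T (\<lambda>\<omega>. sf k (propA pf k a \<omega>))"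
proof -
  assume o: "okp pf" and k: "k \<in> {1..T}"
  have "(\<lambda>\<omega>. sf k (propA pf k a \<omega>)) \<in> borel_measurable (MM T)"
    using propA_rng[OF o k] by (intro meas_cont01[OF goodD(1)[OF propA_good[OF o k]] _ sf_cont[OF k]]) auto
  moreover have "\<forall>\<omega>\<in>Om T. \<bar>sf k (propA pf k a \<omega>)\<bar> \<le> 1"
    using propA_rng[OF o k] s_range[OF k] by (simp add: abs_le_iff)
  ultimately show ?thesis unfolding good_def by blast
qed

lemma s'P_good: "okp pf \<Longrightarrow> k \<in> {1..T} \<Longrightarrow> good T (\<lambda>\<omega>. sf' k (propA pf k a \<omega>))"
proof -
  assume o: "okp pf" and k: "k \<in> {1..T}"
  have "(\<lambda>\<omega>. sf' k (propA pf k a \<omega>)) \<in> borel_measurable (MM T)"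
    using propA_rng[OF o k] by (intro meas_cont01[OF goodD(1)[OF propA_good[OF o k]] _ sf'_cont[OF k]]) auto
  moreover have "\<forall>\<omega>\<in>Om T. \<bar>sf' k (propA pf k a \<omega>)\<bar> \<le> Ds"
    using propA_rng[OF o k] s'_bounded[OF k] by auto
  ultimately show ?thesis unfolding good_def by blast
qed

lemma Qf_eq: "Qf sf abar pf k b = (\<lambda>\<omega>. if b = abar k
    then propA pf k (abar k) \<omega> + sf k (propA pf k (abar k) \<omega>) * (1 - propA pf k (abar k) \<omega>)
    else 1 - (propA pf k (abar k) \<omega> + sf k (propA pf k (abar k) \<omega>) * (1 - propA pf k (abar k) \<omega>)))"
  by (auto simp: fun_eq_iff Qf_def Let_def)

lemma Qf_good: "okp pf \<Longrightarrow> k \<in> {1..T} \<Longrightarrow> good T (Qf sf abar pf k b)"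
  unfolding Qf_eq
  by (cases "b = abar k") (simp_all add: good_add good_mult good_diff good_const propA_good sP_good)

lemma Qf_rng: "okp pf \<Longrightarrow> k \<in> {1..T} \<Longrightarrow> \<omega> \<in> Om T \<Longrightarrow> 0 \<le> Qf sf abar pf k b \<omega> \<and> Qf sf abar pf k b \<omega> \<le> 1"
proof -
  assume o: "okp pf" and k: "k \<in> {1..T}" and w: "\<omega> \<in> Om T"
  define P where "P = propA pf k (abar k) \<omega>"
  have P: "0 \<le> P" "P \<le> 1" using propA_rng[OF o k w] by (auto simp: P_def)
  have s: "0 \<le> sf k P" "sf k P \<le> 1" using s_range[OF k, of P] P by auto
  have a: "0 \<le> sf k P * (1 - P)" using P s by simp
  have b: "sf k P * (1 - P) \<le> 1 * (1 - P)" using P s by (intro mult_right_mono) auto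
  show ?thesis unfolding Qf_eq P_def[symmetric] using P a b by auto
qed

lemma phif_eq: "phif sf sf' abar pf k b = (\<lambda>\<omega>. (2 * of_bool (b = abar k) - 1) * (of_bool (snd (\<omega> k) = abar k) - propA pf k (abar k) \<omega>)
         * (1 - sf k (propA pf k (abar k) \<omega>) + sf' k (propA pf k (abar k) \<omega>) * (1 - propA pf k (abar k) \<omega>)))"
  by (auto simp: fun_eq_iff phif_def Let_def)

lemma phif_good: "okp pf \<Longrightarrow> k \<in> {1..T} \<Longrightarrow> good T (phif sf sf' abar pf k b)"
proof -
  assume o: "okp pf" and k: "k \<in> {1..T}"
  have "good T (\<lambda>\<omega>. (\<lambda>a \<omega>. of_bool (a = abar k) :: real) (snd (\<omega> k)) \<omega>)"
    by (rule good_sel[OF good_const good_const k])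
  then have g: "good T (\<lambda>\<omega>. of_bool (snd (\<omega> k) = abar k))" by simp
  show ?thesis unfolding phif_eq
    by (intro good_mult good_add good_diff good_const g propA_good[OF o k] sP_good[OF o k] s'P_good[OF o k])
qed

lemma rf_good: "okp pf \<Longrightarrow> k \<in> {1..T} \<Longrightarrow> (\<And>\<omega>. \<omega> \<in> Om T \<Longrightarrow> \<bar>rf sf abar pf k b \<omega>\<bar> \<le> Bd) \<Longrightarrow> good T (rf sf abar pf k b)"
proof -
  assume o: "okp pf" and k: "k \<in> {1..T}" and B: "\<And>\<omega>. \<omega> \<in> Om T \<Longrightarrow> \<bar>rf sf abar pf k b \<omega>\<bar> \<le> Bd"
  have "rf sf abar pf k b = (\<lambda>\<omega>. Qf sf abar pf k b \<omega> / propA pf k b \<omega>)" by (simp add: fun_eq_iff rf_def)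
  moreover have "(\<lambda>\<omega>. Qf sf abar pf k b \<omega> / propA pf k b \<omega>) \<in> borel_measurable (MM T)"
    using goodD(1)[OF Qf_good[OF o k]] goodD(1)[OF propA_good[OF o k]] by (rule borel_measurable_divide)
  ultimately show ?thesis using B unfolding good_def by auto
qed

lemma rp_bound: "k \<in> {1..T} \<Longrightarrow> \<omega> \<in> Om T \<Longrightarrow> \<bar>rf sf abar p k b \<omega>\<bar> \<le> \<bar>C\<bar>"
proof -
  assume k: "k \<in> {1..T}" and w: "\<omega> \<in> Om T"
  have Q: "0 \<le> Qf sf abar p k b \<omega>" "Qf sf abar p k b \<omega> \<le> C * propA p k b \<omega>"
    using Qf_rng[OF okp_p k w] r_bounded[OF k w] by auto
  have P: "0 \<le> propA p k b \<omega>" using propA_rng[OF okp_p k w] by auto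
  show ?thesis
  proof (cases "propA p k b \<omega> = 0")
    case True then show ?thesis by (simp add: rf_def)
  next
    case False
    then have P': "0 < propA p k b \<omega>" using P by simp
    have "rf sf abar p k b \<omega> \<le> C" using Q P' by (simp add: rf_def divide_le_eq)
    moreover have "0 \<le> rf sf abar p k b \<omega>" using Q P' by (simp add: rf_def)
    ultimately show ?thesis by simp
  qed
qed

lemma rp_good: "k \<in> {1..T} \<Longrightarrow> good T (rf sf abar p k b)"
  by (rule rf_good[OF okp_p _ rp_bound])

lemma rh_good: "k \<in> {1..T} \<Longrightarrow> good T (rf sf abar ph k b)"
  by (rule rf_good[OF okp_ph _ rh_bounded])

lemma rp_sel_good: "k \<in> {1..T} \<Longrightarrow> good T (\<lambda>\<omega>. rf sf abar p k (snd (\<omega> k)) \<omega>)"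
  by (rule good_sel[OF rp_good rp_good])

lemma rh_sel_good: "k \<in> {1..T} \<Longrightarrow> good T (\<lambda>\<omega>. rf sf abar ph k (snd (\<omega> k)) \<omega>)"
  by (rule good_sel[OF rh_good rh_good])

lemma Qf_prefix: "k \<in> {1..s} \<Longrightarrow> Qf sf abar pf k b (prefix s \<omega>) = Qf sf abar pf k b \<omega>"
  by (simp add: Qf_def propA_prefix)

lemma rf_prefix: "k \<in> {1..s} \<Longrightarrow> rf sf abar pf k b (prefix s \<omega>) = rf sf abar pf k b \<omega>"
  by (simp add: rf_def Qf_prefix propA_prefix)

lemma phif_prefix: "k \<in> {1..s} \<Longrightarrow> phif sf sf' abar pf k b (prefix s \<omega>) = phif sf sf' abar pf k b \<omega>"
  by (simp add: phif_def propA_prefix snd_prefix)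

lemma prop_r:
  assumes k: "k \<in> {1..T}" and w: "\<omega> \<in> Om k"
  shows "propA p k b \<omega> * rf sf abar p k b \<omega> = Qf sf abar p k b \<omega>"
proof -
  have x0: "fst (\<omega> k) \<in> space N" using w k unfolding Om_iff by auto
  obtain \<omega>' where w': "\<omega>' \<in> Om T" "prefix k \<omega>' = \<omega>" using extend_Om[OF w _ x0] k by auto
  have kk: "k \<in> {1..k}" using k by auto
  have e: "propA p k b \<omega> = propA p k b \<omega>'" "rf sf abar p k b \<omega> = rf sf abar p k b \<omega>'" "Qf sf abar p k b \<omega> = Qf sf abar p k b \<omega>'"
    using propA_prefix[OF kk] rf_prefix[OF kk] Qf_prefix[OF kk] w'(2) by metis+
  have Q: "0 \<le> Qf sf abar p k b \<omega>'" "Qf sf abar p k b \<omega>' \<le> C * propA p k b \<omega>'"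
    using Qf_rng[OF okp_p k w'(1)] r_bounded[OF k w'(1)] by auto
  show ?thesis unfolding e
  proof (cases "propA p k b \<omega>' = 0")
    case True then show "propA p k b \<omega>' * rf sf abar p k b \<omega>' = Qf sf abar p k b \<omega>'" using Q by simp
  next
    case False then show "propA p k b \<omega>' * rf sf abar p k b \<omega>' = Qf sf abar p k b \<omega>'" by (simp add: rf_def)
  qed
qed

abbreviation "mt \<equiv> mtrue T \<kappa> p sf abar"

definition W :: "nat \<Rightarrow> 'x path \<Rightarrow> real" where
  "W s \<omega> = (\<Sum>b\<in>UNIV. mt s (prefix s (setA s b \<omega>)) * Qf sf abar p s b \<omega>)"

lemma mt_step: "s < T \<Longrightarrow> mt s h = CE (W (Suc s)) s h"
  by (subst mtrue.simps) (simp add: W_def[abs_def])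

lemma mt_T: "T \<le> s \<Longrightarrow> mt s h = of_bool (snd (h T))"
  by (subst mtrue.simps) simp

lemma mt_good: assumes "1 \<le> T" "s \<le> T" shows "good s (mt s)"
  using assms(2)
proof (induction rule: inc_induct)
  case base
  have e: "mt T = (\<lambda>h. of_bool (snd (h T)))" by (simp add: fun_eq_iff mt_T)
  have "(\<lambda>h. of_bool (snd (h T)) :: real) \<in> borel_measurable (MM T)"
    using measurable_comp[OF snd_meas[of T T], of "\<lambda>b. of_bool b" borel] assms(1) by (simp add: comp_def)
  then show ?case unfolding e good_def by (auto intro!: exI[of _ 1])
next
  case (step n)
  have e: "mt n = CE (W (Suc n)) n" by (simp add: fun_eq_iff mt_step[OF step(2)])
  have k: "Suc n \<in> {1..T}" using step(2) by auto
  have "good T (W (Suc n))"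
    unfolding W_def[abs_def]
    by (intro good_sum good_mult good_setA[OF step.IH k] Qf_good[OF okp_p k]) auto
  then show ?case unfolding e by (rule good_condE) (use step in auto)
qed

lemma W_good: "s \<in> {1..T} \<Longrightarrow> good T (W s)"
  unfolding W_def[abs_def]
  by (intro good_sum good_mult good_setA[OF mt_good] Qf_good[OF okp_p]) auto

lemma W_dep: "1 \<le> s \<Longrightarrow> W s \<omega> = W s (prefix s \<omega>)"
  unfolding W_def by (simp add: prefix_setA_prefix Qf_prefix)

definition V :: "nat \<Rightarrow> 'x path \<Rightarrow> real" where
  "V s \<omega> = (\<Sum>b\<in>UNIV. mt s (prefix s (setA s b \<omega>)) * (Qf sf abar p s b \<omega> + phif sf sf' abar p s b \<omega>))"

lemma V_good: "s \<in> {1..T} \<Longrightarrow> good T (V s)"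
  unfolding V_def[abs_def]
  by (intro good_sum good_mult good_add good_setA[OF mt_good] Qf_good[OF okp_p] phif_good[OF okp_p]) auto

lemma V_dep: "1 \<le> s \<Longrightarrow> V s \<omega> = V s (prefix s \<omega>)"
  unfolding V_def by (simp add: prefix_setA_prefix Qf_prefix phif_prefix)

lemma V_onestep: assumes "Suc t \<le> T" "h \<in> Om t" shows "CE (V (Suc t)) t h = CE (W (Suc t)) t h"
proof (rule condE_onestep[OF assms(1) _ _ assms(2)])
  show "\<And>\<omega>. V (Suc t) \<omega> = V (Suc t) (prefix (Suc t) \<omega>)" by (rule V_dep) simp
  show "\<And>\<omega>. W (Suc t) \<omega> = W (Suc t) (prefix (Suc t) \<omega>)" by (rule W_dep) simp
  fix x assume x: "x \<in> space N"
  show "p (Suc t) (h, x) * V (Suc t) (h(Suc t := (x, True))) + (1 - p (Suc t) (h, x)) * V (Suc t) (h(Suc t := (x, False))) =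
        p (Suc t) (h, x) * W (Suc t) (h(Suc t := (x, True))) + (1 - p (Suc t) (h, x)) * W (Suc t) (h(Suc t := (x, False)))"
    unfolding V_def W_def
    by (cases "abar (Suc t)") (simp_all add: prefix_setA_upd[OF assms(2)] Qf_def phif_def propA_upd[OF assms(2)] Let_def UNIV_bool algebra_simps)
qed


lemma mtp_zero:
  assumes "s < T" "h' \<in> Om s" "good T f" "CE f s h' = mt s h'"
  shows "CE (\<lambda>\<omega>. f \<omega> - mt s (prefix s \<omega>)) s h' = 0"
proof -
  have T1: "1 \<le> T" using assms by simp
  have g: "good T (\<lambda>\<omega>. mt s (prefix s \<omega>))" using good_prefix[OF mt_good[OF T1] ] assms(1) by simp
  have "CE (\<lambda>\<omega>. f \<omega> - mt s (prefix s \<omega>)) s h' = CE f s h' - CE (\<lambda>\<omega>. mt s (prefix s \<omega>)) s h'"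
    using condE_diff[OF assms(3) g, of s] assms by simp
  also have "CE (\<lambda>\<omega>. mt s (prefix s \<omega>)) s h' = mt s (prefix s h')"
    by (rule condE_self) (use assms in \<open>auto simp: prefix_prefix\<close>)
  also have "\<dots> = mt s h'" using prefix_id[OF assms(2)] by simp
  finally show ?thesis using assms(4) by simp
qed

lemma main1:
  assumes t: "t < T" and h: "h \<in> Om t"
  shows "CE (Pstar T sf sf' abar p mt (Suc t)) t h = mt t h"
proof -
  have T1: "1 \<le> T" using t by simp
  define R where "R s \<omega> = (\<Prod>k\<in>{Suc t..s}. rf sf abar p k (snd (\<omega> k)) \<omega>)" for s \<omega>
  define G where "G s \<omega> = R s \<omega> * (V (Suc s) \<omega> - mt s (prefix s \<omega>))" for s \<omega>
  have P_eq: "Pstar T sf sf' abar p mt (Suc t) \<omega> = V (Suc t) \<omega> + (\<Sum>s\<in>{Suc t..T-1}. G s \<omega>)" for \<omega>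
  proof (cases "Suc t = T")
    case True
    have m: "mt T (prefix T (setA T b \<omega>)) = of_bool b" for b
      using T1 by (simp add: mt_T prefix_def setA_def)
    show ?thesis using True by (simp add: Pstar_def V_def m UNIV_bool)
  next
    case False
    then show ?thesis by (simp add: Pstar_def V_def G_def R_def)
  qed
  have gR: "good T (R s)" if "s \<le> T" for s
    unfolding R_def[abs_def] using that by (intro good_prod rp_sel_good) auto
  have gG: "good T (G s)" if "s \<in> {Suc t..T-1}" for s
  proof -
    have "Suc s \<in> {1..T}" "s \<le> T" using that t by auto
    then show ?thesis unfolding G_def[abs_def]
      by (intro good_mult good_diff gR V_good good_prefix[OF mt_good[OF T1]]) auto
  qed
  have gV: "good T (V (Suc t))" using t by (intro V_good) auto
  have gS: "good T (\<lambda>\<omega>. \<Sum>s\<in>{Suc t..T-1}. G s \<omega>)" by (rule good_sum) (auto intro: gG)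
  have "CE (Pstar T sf sf' abar p mt (Suc t)) t h = CE (\<lambda>\<omega>. V (Suc t) \<omega> + (\<Sum>s\<in>{Suc t..T-1}. G s \<omega>)) t h"
    using condE_cong[of "Pstar T sf sf' abar p mt (Suc t)" "\<lambda>\<omega>. V (Suc t) \<omega> + (\<Sum>s\<in>{Suc t..T-1}. G s \<omega>)" t] P_eq t h by simp
  also have "\<dots> = CE (V (Suc t)) t h + CE (\<lambda>\<omega>. \<Sum>s\<in>{Suc t..T-1}. G s \<omega>) t h"
    using condE_add[OF gV gS, of t] t h by simp
  also have "CE (\<lambda>\<omega>. \<Sum>s\<in>{Suc t..T-1}. G s \<omega>) t h = (\<Sum>s\<in>{Suc t..T-1}. CE (G s) t h)"
    using condE_sum[of "{Suc t..T-1}" G t h] gG t h by simp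
  also have "\<dots> = 0"
  proof (rule sum.neutral, rule ballI)
    fix s assume s: "s \<in> {Suc t..T-1}"
    have sT: "s < T" "t \<le> s" using s t by auto
    show "CE (G s) t h = 0"
    proof (rule condE_zero[OF sT(2) less_imp_le[OF sT(1)] _ h], rule ballI)
      fix h' assume h': "h' \<in> Om s"
      have Rdep: "R s \<omega> = R s (prefix s \<omega>)" for \<omega>
        unfolding R_def by (intro prod.cong refl) (auto simp: rf_prefix snd_prefix)
      have "CE (G s) s h' = R s h' * CE (\<lambda>\<omega>. V (Suc s) \<omega> - mt s (prefix s \<omega>)) s h'"
        using condE_pull[where G="R s" and s=s and t=s and f="\<lambda>\<omega>. V (Suc s) \<omega> - mt s (prefix s \<omega>)", OF Rdep order.refl less_imp_le[OF sT(1)]] h'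
        unfolding G_def[abs_def] by simp
      also have "CE (\<lambda>\<omega>. V (Suc s) \<omega> - mt s (prefix s \<omega>)) s h' = 0"
      proof (rule mtp_zero[OF sT(1) h'])
        show "good T (V (Suc s))" using sT by (intro V_good) auto
        show "CE (V (Suc s)) s h' = mt s h'"
          using V_onestep[of s h'] sT h' mt_step[OF sT(1)] by simp
      qed
      finally show "CE (G s) s h' = 0" by simp
    qed
  qed
  also have "CE (V (Suc t)) t h = mt t h"
    using V_onestep[of t h] t h mt_step[OF t] by simp
  finally show ?thesis by simp
qed

lemma mh_good: "s \<in> {1..T} \<Longrightarrow> good s (mh s)"
  unfolding good_def using mh_meas mh_bounded by blast

definition Vh :: "nat \<Rightarrow> 'x path \<Rightarrow> real" where
  "Vh s \<omega> = (\<Sum>b\<in>UNIV. mh s (prefix s (setA s b \<omega>)) * (Qf sf abar ph s b \<omega> + phif sf sf' abar ph s b \<omega>))"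

definition X :: "nat \<Rightarrow> 'x path \<Rightarrow> real" where
  "X s \<omega> = (\<Sum>b\<in>UNIV. mh s (prefix s (setA s b \<omega>)) * Qf sf abar p s b \<omega>)"

lemma X_good: "s \<in> {1..T} \<Longrightarrow> good T (X s)"
  unfolding X_def[abs_def]
  by (intro good_sum good_mult good_setA[OF mh_good] Qf_good[OF okp_p]) auto

lemma X_prefix: "1 \<le> s \<Longrightarrow> X s (prefix s \<omega>) = X s \<omega>"
  unfolding X_def by (simp add: prefix_setA_prefix Qf_prefix)

definition EF :: "nat \<Rightarrow> 'x path \<Rightarrow> real" where
  "EF s \<omega> = rf sf abar p s (snd (\<omega> s)) \<omega> * (mt s (prefix s \<omega>) - mh s (prefix s \<omega>)) + X s \<omega> - mt (s - 1) (prefix (s - 1) \<omega>)"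

definition WF :: "nat \<Rightarrow> 'x path \<Rightarrow> real" where
  "WF s \<omega> = W s \<omega> - mt (s - 1) (prefix (s - 1) \<omega>)"

lemma EF_good: "s \<in> {1..T} \<Longrightarrow> good T (EF s)"
proof -
  assume s: "s \<in> {1..T}"
  have T1: "1 \<le> T" using s by simp
  show ?thesis unfolding EF_def[abs_def]
    using s by (intro good_diff good_add good_mult rp_sel_good X_good good_prefix[OF mt_good[OF T1]] good_prefix[OF mh_good]) auto
qed

lemma E_onestep:
  assumes j: "Suc j \<le> T" and h': "h' \<in> Om j"
  shows "CE (EF (Suc j)) j h' = CE (WF (Suc j)) j h'"
proof (rule condE_onestep[OF j _ _ h'])
  show "\<And>\<omega>. EF (Suc j) \<omega> = EF (Suc j) (prefix (Suc j) \<omega>)"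
    unfolding EF_def by (simp add: rf_prefix snd_prefix prefix_prefix X_prefix)
  show "\<And>\<omega>. WF (Suc j) \<omega> = WF (Suc j) (prefix (Suc j) \<omega>)"
    unfolding WF_def using W_dep[of "Suc j"] by (simp add: prefix_prefix)
  fix x assume x: "x \<in> space N"
  define \<omega>T where "\<omega>T = h'(Suc j := (x, True))"
  define \<omega>F where "\<omega>F = h'(Suc j := (x, False))"
  define P where "P = p (Suc j) (h', x)"
  define qT where "qT = Qf sf abar p (Suc j) True \<omega>T"
  define qF where "qF = Qf sf abar p (Suc j) False \<omega>T"
  have k: "Suc j \<in> {1..T}" using j by simp
  have wT: "\<omega>T \<in> Om (Suc j)" "\<omega>F \<in> Om (Suc j)" using upd_in[OF h' x] by (auto simp: \<omega>T_def \<omega>F_def)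
  have qeq: "Qf sf abar p (Suc j) b \<omega>F = Qf sf abar p (Suc j) b \<omega>T" for b
    by (simp add: \<omega>T_def \<omega>F_def Qf_def propA_upd[OF h'])
  have qeq': "Qf sf abar p (Suc j) b (h'(Suc j := (x, False))) = Qf sf abar p (Suc j) b (h'(Suc j := (x, True)))" for b
    using qeq[of b] by (simp add: \<omega>T_def \<omega>F_def)
  have pr1: "P * rf sf abar p (Suc j) True \<omega>T = qT"
    using prop_r[OF k wT(1), of True] by (simp add: qT_def P_def \<omega>T_def propA_upd[OF h'])
  have pr0: "(1 - P) * rf sf abar p (Suc j) False \<omega>F = qF"
    using prop_r[OF k wT(2), of False] qeq[of False] by (simp add: qF_def P_def \<omega>F_def propA_upd[OF h'])
  have sa: "prefix (Suc j) (setA (Suc j) b \<omega>T) = h'(Suc j := (x, b))" "prefix (Suc j) (setA (Suc j) b \<omega>F) = h'(Suc j := (x, b))" for b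
    using prefix_setA_upd[OF h'] by (auto simp: \<omega>T_def \<omega>F_def)
  have XT: "X (Suc j) \<omega>T = mh (Suc j) \<omega>T * qT + mh (Suc j) \<omega>F * qF"
    unfolding X_def by (simp add: prefix_setA_upd[OF h'] UNIV_bool qT_def qF_def \<omega>T_def \<omega>F_def algebra_simps)
  have XF: "X (Suc j) \<omega>F = mh (Suc j) \<omega>T * qT + mh (Suc j) \<omega>F * qF"
    unfolding X_def by (simp add: prefix_setA_upd[OF h'] UNIV_bool qT_def qF_def qeq' \<omega>T_def \<omega>F_def algebra_simps)
  have WT: "W (Suc j) \<omega>T = mt (Suc j) \<omega>T * qT + mt (Suc j) \<omega>F * qF"
    unfolding W_def by (simp add: prefix_setA_upd[OF h'] UNIV_bool qT_def qF_def \<omega>T_def \<omega>F_def algebra_simps)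
  have WF': "W (Suc j) \<omega>F = mt (Suc j) \<omega>T * qT + mt (Suc j) \<omega>F * qF"
    unfolding W_def by (simp add: prefix_setA_upd[OF h'] UNIV_bool qT_def qF_def qeq' \<omega>T_def \<omega>F_def algebra_simps)
  have pf: "prefix (Suc j) \<omega>T = \<omega>T" "prefix (Suc j) \<omega>F = \<omega>F" "prefix j \<omega>T = h'" "prefix j \<omega>F = h'"
    using prefix_upd_self[OF h'] prefix_upd_t[OF h'] by (auto simp: \<omega>T_def \<omega>F_def)
  have sn: "snd (\<omega>T (Suc j)) = True" "snd (\<omega>F (Suc j)) = False" by (auto simp: \<omega>T_def \<omega>F_def)
  have "P * EF (Suc j) \<omega>T + (1 - P) * EF (Suc j) \<omega>F = P * WF (Suc j) \<omega>T + (1 - P) * WF (Suc j) \<omega>F"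
    using alg_onestep[OF pr1 pr0, where mT="mt (Suc j) \<omega>T" and mF="mt (Suc j) \<omega>F" and hT="mh (Suc j) \<omega>T"
        and hF="mh (Suc j) \<omega>F" and c="mt j h'"]
    unfolding EF_def WF_def by (simp add: pf sn XT XF WT WF')
  then show "p (Suc j) (h', x) * EF (Suc j) (h'(Suc j := (x, True))) + (1 - p (Suc j) (h', x)) * EF (Suc j) (h'(Suc j := (x, False))) =
    p (Suc j) (h', x) * WF (Suc j) (h'(Suc j := (x, True))) + (1 - p (Suc j) (h', x)) * WF (Suc j) (h'(Suc j := (x, False)))"
    by (simp add: P_def \<omega>T_def \<omega>F_def)
qed

lemma E_zero:
  assumes j: "Suc j \<le> T" and h': "h' \<in> Om j"
  shows "CE (EF (Suc j)) j h' = 0"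
proof -
  have "CE (EF (Suc j)) j h' = CE (\<lambda>\<omega>. W (Suc j) \<omega> - mt j (prefix j \<omega>)) j h'"
    using E_onestep[OF j h'] by (simp add: WF_def[abs_def])
  also have "\<dots> = 0"
    by (rule mtp_zero) (use j h' mt_step[of j h'] W_good[of "Suc j"] in auto)
  finally show ?thesis .
qed

lemma main2:
  assumes t: "t < T" and h: "h \<in> Om t"
  shows "CE (\<lambda>\<omega>. Pstar T sf sf' abar ph mh (Suc t) \<omega> - mt t (prefix t \<omega>)) t h
       = (\<Sum>s\<in>{Suc t..T}. CE
            (\<lambda>\<omega>. (\<Prod>k\<in>{Suc t..<s}. rf sf abar ph k (snd (\<omega> k)) \<omega>)
                 * (mt s (prefix s \<omega>) - mh s (prefix s \<omega>))
                 * (rf sf abar ph s (snd (\<omega> s)) \<omega> - rf sf abar p s (snd (\<omega> s)) \<omega>)) t h)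
       + (\<Sum>s\<in>{Suc t..T}. CE
            (\<lambda>\<omega>. (\<Prod>k\<in>{Suc t..<s}. rf sf abar ph k (snd (\<omega> k)) \<omega>)
                 * (\<Sum>b\<in>UNIV. mh s (prefix s (setA s b \<omega>))
                      * (Qf sf abar ph s b \<omega> + phif sf sf' abar ph s b \<omega> - Qf sf abar p s b \<omega>))) t h)"
proof -
  have T1: "1 \<le> T" using t by simp
  define Rh where "Rh = (\<lambda>s \<omega>. \<Prod>k\<in>{Suc t..<s}. rf sf abar ph k (snd (\<omega> k)) \<omega>)"
  define A where "A = (\<lambda>s \<omega>. (\<Prod>k\<in>{Suc t..<s}. rf sf abar ph k (snd (\<omega> k)) \<omega>)
                 * (mt s (prefix s \<omega>) - mh s (prefix s \<omega>))
                 * (rf sf abar ph s (snd (\<omega> s)) \<omega> - rf sf abar p s (snd (\<omega> s)) \<omega>))"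
  define B where "B = (\<lambda>s \<omega>. (\<Prod>k\<in>{Suc t..<s}. rf sf abar ph k (snd (\<omega> k)) \<omega>)
                 * (\<Sum>b\<in>UNIV. mh s (prefix s (setA s b \<omega>))
                      * (Qf sf abar ph s b \<omega> + phif sf sf' abar ph s b \<omega> - Qf sf abar p s b \<omega>)))"
  define E where "E = (\<lambda>s \<omega>. Rh s \<omega> * EF s \<omega>)"
  have gRh: "good T (Rh s)" if "s \<le> T" for s
    unfolding Rh_def using that by (intro good_prod rh_sel_good) auto
  have gA: "good T (A s)" if "s \<in> {Suc t..T}" for s
    unfolding A_def using that gRh[of s] unfolding Rh_def
    by (intro good_mult good_diff good_prefix[OF mt_good[OF T1]] good_prefix[OF mh_good] rh_sel_good rp_sel_good) auto
  have gB: "good T (B s)" if "s \<in> {Suc t..T}" for s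
    unfolding B_def using that gRh[of s] unfolding Rh_def
    by (intro good_mult good_sum good_diff good_add good_setA[OF mh_good] Qf_good[OF okp_p] Qf_good[OF okp_ph] phif_good[OF okp_ph]) auto
  have gE: "good T (E s)" if "s \<in> {Suc t..T}" for s
    unfolding E_def using that gRh[of s] by (intro good_mult EF_good) auto
  have pw: "Pstar T sf sf' abar ph mh (Suc t) \<omega> - mt t (prefix t \<omega>) = (\<Sum>s\<in>{Suc t..T}. A s \<omega> + B s \<omega> + E s \<omega>)"
    if w: "\<omega> \<in> Om T" for \<omega>
  proof -
    have P_eq: "Pstar T sf sf' abar ph mh (Suc t) \<omega> = Vh (Suc t) \<omega> + (\<Sum>s\<in>{Suc t..<T}. Rh (Suc s) \<omega> * (Vh (Suc s) \<omega> - mh s (prefix s \<omega>)))"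
    proof (cases "Suc t = T")
      case True
      have m: "mh T (prefix T (setA T b \<omega>)) = of_bool b" for b
        using mh_T[OF setA_in[OF w, of T b]] T1 by (simp add: prefix_def setA_def)
      show ?thesis using True by (simp add: Pstar_def Vh_def m UNIV_bool)
    next
      case False
      have i: "{Suc t..T-1} = {Suc t..<T}" "{Suc t..T - Suc 0} = {Suc t..<T}" using t by auto
      have "(\<Sum>s\<in>{Suc t..<T}. (\<Prod>k\<in>{Suc t..s}. rf sf abar ph k (snd (\<omega> k)) \<omega>) *
              ((\<Sum>b\<in>UNIV. mh (Suc s) (prefix (Suc s) (setA (Suc s) b \<omega>)) * (Qf sf abar ph (Suc s) b \<omega> + phif sf sf' abar ph (Suc s) b \<omega>)) - mh s (prefix s \<omega>)))
          = (\<Sum>s\<in>{Suc t..<T}. Rh (Suc s) \<omega> * (Vh (Suc s) \<omega> - mh s (prefix s \<omega>)))"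
        by (rule sum.cong[OF refl]) (simp only: Rh_def Vh_def atLeastLessThanSuc_atLeastAtMost)
      then show ?thesis using False by (simp add: Pstar_def Vh_def i)
    qed
    have ABE: "A s \<omega> + B s \<omega> + E s \<omega> = Rh s \<omega> * ((mt s (prefix s \<omega>) - mh s (prefix s \<omega>)) * rf sf abar ph s (snd (\<omega> s)) \<omega>
                 + Vh s \<omega> - mt (s - 1) (prefix (s - 1) \<omega>))" for s
    proof -
      have bs: "(\<Sum>b\<in>UNIV. mh s (prefix s (setA s b \<omega>)) * (Qf sf abar ph s b \<omega> + phif sf sf' abar ph s b \<omega> - Qf sf abar p s b \<omega>))
          = Vh s \<omega> - X s \<omega>"
        by (simp add: Vh_def X_def UNIV_bool algebra_simps)
      show ?thesis unfolding A_def B_def E_def EF_def Rh_def bs by (simp add: algebra_simps)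
    qed
    have tel: "Vh (Suc t) \<omega> + (\<Sum>s\<in>{Suc t..<T}. Rh (Suc s) \<omega> * (Vh (Suc s) \<omega> - mh s (prefix s \<omega>))) - mt (Suc t - 1) (prefix (Suc t - 1) \<omega>)
        = (\<Sum>s\<in>{Suc t..T}. Rh s \<omega> * ((mt s (prefix s \<omega>) - mh s (prefix s \<omega>)) * rf sf abar ph s (snd (\<omega> s)) \<omega>
                 + Vh s \<omega> - mt (s - 1) (prefix (s - 1) \<omega>)))"
    proof (rule telescope[where Rh="\<lambda>s. Rh s \<omega>" and rr="\<lambda>s. rf sf abar ph s (snd (\<omega> s)) \<omega>"
          and Vh="\<lambda>s. Vh s \<omega>" and m="\<lambda>s. mt s (prefix s \<omega>)" and mh="\<lambda>s. mh s (prefix s \<omega>)"])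
      show "Suc t \<le> T" using t by simp
      show "Rh (Suc t) \<omega> = 1" by (simp add: Rh_def)
      show "Rh (Suc s) \<omega> = Rh s \<omega> * rf sf abar ph s (snd (\<omega> s)) \<omega>" if "Suc t \<le> s" for s
        using that by (simp add: Rh_def)
      show "mh T (prefix T \<omega>) = mt T (prefix T \<omega>)"
        using mh_T[OF prefix_in[OF w order.refl]] mt_T[of T] by simp
    qed
    show ?thesis using P_eq tel ABE by simp
  qed
  have "CE (\<lambda>\<omega>. Pstar T sf sf' abar ph mh (Suc t) \<omega> - mt t (prefix t \<omega>)) t h
      = CE (\<lambda>\<omega>. \<Sum>s\<in>{Suc t..T}. A s \<omega> + B s \<omega> + E s \<omega>) t h"
    using condE_cong[of "\<lambda>\<omega>. Pstar T sf sf' abar ph mh (Suc t) \<omega> - mt t (prefix t \<omega>)" "\<lambda>\<omega>. \<Sum>s\<in>{Suc t..T}. A s \<omega> + B s \<omega> + E s \<omega>" t]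
      pw t h by simp
  also have "\<dots> = (\<Sum>s\<in>{Suc t..T}. CE (\<lambda>\<omega>. A s \<omega> + B s \<omega> + E s \<omega>) t h)"
    by (rule condE_sum) (use t h in \<open>auto intro!: good_add gA gB gE\<close>)
  also have "\<dots> = (\<Sum>s\<in>{Suc t..T}. CE (A s) t h + CE (B s) t h)"
  proof (rule sum.cong[OF refl])
    fix s assume s: "s \<in> {Suc t..T}"
    have e1: "CE (\<lambda>\<omega>. A s \<omega> + B s \<omega> + E s \<omega>) t h = CE (\<lambda>\<omega>. A s \<omega> + B s \<omega>) t h + CE (E s) t h"
      using condE_add[OF good_add[OF gA[OF s] gB[OF s]] gE[OF s], of t] t h by simp
    have e2: "CE (\<lambda>\<omega>. A s \<omega> + B s \<omega>) t h = CE (A s) t h + CE (B s) t h"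
      using condE_add[OF gA[OF s] gB[OF s], of t] t h by simp
    obtain j where j: "s = Suc j" using s by (cases s) auto
    have jT: "Suc j \<le> T" "t \<le> j" "j \<le> T" using s j by auto
    have e3: "CE (E s) t h = 0"
    proof (rule condE_zero[OF jT(2) jT(3) _ h], rule ballI)
      fix h' assume h': "h' \<in> Om j"
      have Rdep: "Rh s \<omega> = Rh s (prefix j \<omega>)" for \<omega>
        unfolding Rh_def j by (intro prod.cong refl) (auto simp: rf_prefix snd_prefix)
      have "CE (E s) j h' = Rh s h' * CE (EF s) j h'"
        using condE_pull[where G="Rh s" and s=j and t=j and f="EF s", OF Rdep order.refl jT(3)] h'
        unfolding E_def by simp
      also have "CE (EF s) j h' = 0" using E_zero[OF jT(1) h'] j by simp
      finally show "CE (E s) j h' = 0" by simp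
    qed
    show "CE (\<lambda>\<omega>. A s \<omega> + B s \<omega> + E s \<omega>) t h = CE (A s) t h + CE (B s) t h"
      using e1 e2 e3 by simp
  qed
  also have "\<dots> = (\<Sum>s\<in>{Suc t..T}. CE (A s) t h) + (\<Sum>s\<in>{Suc t..T}. CE (B s) t h)"
    by (rule sum.distrib)
  finally show ?thesis unfolding A_def B_def .
qed
end


theorem lemma2:
  fixes T :: nat
    and N :: "'x measure"
    and \<kappa> :: "nat \<Rightarrow> 'x path \<Rightarrow> 'x measure"
    and p ph :: "nat \<Rightarrow> 'x path \<times> 'x \<Rightarrow> real"
    and abar :: "nat \<Rightarrow> bool"
    and sf sf' :: "nat \<Rightarrow> real \<Rightarrow> real"
    and mh :: "nat \<Rightarrow> 'x path \<Rightarrow> real"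
    and Ds C Ch Bm :: real
  defines "S \<equiv> N \<Otimes>\<^sub>M count_space (UNIV :: bool set)"
  assumes kernel: "\<And>t. t \<in> {1..T} \<Longrightarrow> \<kappa> t \<in> measurable (PiM {1..<t} (\<lambda>_. S)) (prob_algebra N)"
    and p_meas: "\<And>t. t \<in> {1..T} \<Longrightarrow> p t \<in> borel_measurable (PiM {1..<t} (\<lambda>_. S) \<Otimes>\<^sub>M N)"
    and p_range: "\<And>t hx. t \<in> {1..T} \<Longrightarrow> hx \<in> space (PiM {1..<t} (\<lambda>_. S) \<Otimes>\<^sub>M N)
                    \<Longrightarrow> 0 \<le> p t hx \<and> p t hx \<le> 1"
    and s_range: "\<And>t x. t \<in> {1..T} \<Longrightarrow> x \<in> {0..1} \<Longrightarrow> 0 \<le> sf t x \<and> sf t x \<le> 1"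
    and s_deriv: "\<And>t x. t \<in> {1..T} \<Longrightarrow> x \<in> {0..1}
                    \<Longrightarrow> (sf t has_real_derivative sf' t x) (at x within {0..1})"
    and s_twice: "\<And>t x. t \<in> {1..T} \<Longrightarrow> x \<in> {0..1} \<Longrightarrow> sf' t differentiable (at x within {0..1})"
    and s'_nonzero: "\<And>t x. t \<in> {1..T} \<Longrightarrow> x \<in> {0..1} \<Longrightarrow> sf' t x \<noteq> 0"
    and s'_bounded: "\<And>t x. t \<in> {1..T} \<Longrightarrow> x \<in> {0..1} \<Longrightarrow> \<bar>sf' t x\<bar> \<le> Ds"
    and r_bounded: "\<And>t b \<omega>. t \<in> {1..T} \<Longrightarrow> \<omega> \<in> space (PiM {1..T} (\<lambda>_. S))
                    \<Longrightarrow> Qf sf abar p t b \<omega> \<le> C * propA p t b \<omega>"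
    and ph_meas: "\<And>t. t \<in> {1..T} \<Longrightarrow> ph t \<in> borel_measurable (PiM {1..<t} (\<lambda>_. S) \<Otimes>\<^sub>M N)"
    and ph_range: "\<And>t hx. t \<in> {1..T} \<Longrightarrow> hx \<in> space (PiM {1..<t} (\<lambda>_. S) \<Otimes>\<^sub>M N)
                    \<Longrightarrow> 0 \<le> ph t hx \<and> ph t hx \<le> 1"
    and rh_bounded: "\<And>t b \<omega>. t \<in> {1..T} \<Longrightarrow> \<omega> \<in> space (PiM {1..T} (\<lambda>_. S))
                    \<Longrightarrow> \<bar>rf sf abar ph t b \<omega>\<bar> \<le> Ch"
    and mh_meas: "\<And>t. t \<in> {1..T} \<Longrightarrow> mh t \<in> borel_measurable (PiM {1..t} (\<lambda>_. S))"
    and mh_bounded: "\<And>t h. t \<in> {1..T} \<Longrightarrow> h \<in> space (PiM {1..t} (\<lambda>_. S)) \<Longrightarrow> \<bar>mh t h\<bar> \<le> Bm"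
    and mh_T: "\<And>h. h \<in> space (PiM {1..T} (\<lambda>_. S)) \<Longrightarrow> mh T h = of_bool (snd (h T))"
  shows "\<forall>t<T. \<forall>h\<in>space (PiM {1..t} (\<lambda>_. S)).
     condE T \<kappa> p (Pstar T sf sf' abar p (mtrue T \<kappa> p sf abar) (Suc t)) t h
       = mtrue T \<kappa> p sf abar t h
   \<and> condE T \<kappa> p (\<lambda>\<omega>. Pstar T sf sf' abar ph mh (Suc t) \<omega> - mtrue T \<kappa> p sf abar t (prefix t \<omega>)) t h
       = (\<Sum>s\<in>{Suc t..T}. condE T \<kappa> p
            (\<lambda>\<omega>. (\<Prod>k\<in>{Suc t..<s}. rf sf abar ph k (snd (\<omega> k)) \<omega>)
                 * (mtrue T \<kappa> p sf abar s (prefix s \<omega>) - mh s (prefix s \<omega>))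
                 * (rf sf abar ph s (snd (\<omega> s)) \<omega> - rf sf abar p s (snd (\<omega> s)) \<omega>)) t h)
       + (\<Sum>s\<in>{Suc t..T}. condE T \<kappa> p
            (\<lambda>\<omega>. (\<Prod>k\<in>{Suc t..<s}. rf sf abar ph k (snd (\<omega> k)) \<omega>)
                 * (\<Sum>b\<in>UNIV. mh s (prefix s (setA s b \<omega>))
                      * (Qf sf abar ph s b \<omega> + phif sf sf' abar ph s b \<omega> - Qf sf abar p s b \<omega>))) t h)"
  proof -
  have sf_cont: "continuous_on {0..1} (sf k)" if "k \<in> {1..T}" for k
    unfolding continuous_on_eq_continuous_within
    using s_deriv[OF that] by (blast intro: DERIV_continuous)
  have sf'_cont: "continuous_on {0..1} (sf' k)" if "k \<in> {1..T}" for k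
    unfolding continuous_on_eq_continuous_within
    using s_twice[OF that] by (blast intro: differentiable_imp_continuous_within)
  interpret I: setting2 T N \<kappa> p S sf sf' abar C Ch Bm Ds ph mh
  proof
    show "S = N \<Otimes>\<^sub>M count_space UNIV" by (simp add: S_def)
  qed (use kernel p_meas p_range sf_cont sf'_cont s_range s'_bounded r_bounded ph_meas ph_range rh_bounded
         mh_meas mh_bounded mh_T in auto)
  show ?thesis using I.main1 I.main2 by auto
qed

end
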